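(* Let $\mathcal{G}$ be a GBS graph of groups and $w=a_0^{k_0}y_1a_1^{k_1}\cdots y_na_n^{k_n}$ a $\mathcal{G}$-factorization. Let $1\le i_1<\dots<i_j\le n$ be indices such that $[i_1]\cdots[i_j]\in\Sigma_w^*$ is freely reduced and $\mathcal{C}(w)=[1]\cdots[n]=[i_1]\cdots[i_j]$ in $F_{\Lambda_w}$. Then the $\mathcal{G}$-factorization $$\hat w=a_0^{k_{0,i_1-1}}\,y_{i_1}\,a_{i_1}^{k_{i_1,i_2-1}}\cdots y_{i_j}\,a_{i_j}^{k_{i_j,n}}$$ is Britton-reduced and $w=\hat w$ in $F(\mathcal{G})$.
   Context: $\mathcal{G}$: finite connected graph $Y$ (vertices $V(Y)$, edges $E(Y)$, maps $\iota,\tau$, fixed-point-free involution $y\mapsto\bar y$ with $\iota(\bar y)=\tau(y)$) and integers $\alpha_y,\beta_y\ne0$ with $\alpha_y=\beta_{\bar y}$; $F(\mathcal{G})$ has generators $V(Y)\cup E(Y)$ and relations $\bar yy=1$, $y\,b^{\beta_y}\bar y=a^{\alpha_y}$ ($a=\iota(y)$, $b=\tau(y)$). A $\mathcal{G}$-factorization is a word $a_0^{k_0}y_1a_1^{k_1}\cdots y_na_n^{k_n}$ with $\iota(y_i)=a_{i-1}$, $\tau(y_i)=a_i$, $a_n=a_0$, $k_i\in\mathbb{Z}$ ($a^0$ = empty word). For $0\le i\le j\le n$: $w_{i,j}=a_i^{k_i}y_{i+1}\cdots y_ja_j^{k_j}$, $k_{i,j}=\sum_{\nu=i}^{j}k_\nu\prod_{\mu=i+1}^{\nu}\alpha_{y_\mu}/\beta_{y_\mu}\in\mathbb{Q}$.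 Fix an orientation $D\subseteq E(Y)$ and let $\rho$ map words additively to $\mathbb{Z}^D$ via $\rho(a^k)=0$, $\rho(y)=e_y$, $\rho(\bar y)=-e_y$ ($y\in D$). On $\{1,\dots,n\}$ let $i\sim_{\mathcal{C}}j$ iff $y_i=\bar y_j$ and, for $i<j$, $\rho(w_{i,j-1})=0$ and $k_{i,j-1}\in\beta_{y_i}\mathbb{Z}$ (symmetrically for $j<i$); $i\approx j$ iff $i=j$ or $i\sim_{\mathcal{C}}\ell\sim_{\mathcal{C}}j$ for some $\ell$ (an equivalence relation). $\Sigma_w$ is the set of $\approx$-classes $[i]$, enlarged: $\overline{[i]}:=[j]$ if $i\sim_{\mathcal{C}}j$ for some $j$ (well defined), otherwise $\overline{[i]}$ is a new element; this is a fixed-point-free involution on $\Sigma_w$. $\Lambda_w$ contains one element of each pair $\{x,\bar x\}$; $F_{\Lambda_w}$ is the free group on $\Lambda_w$ with $\bar x=x^{-1}$; a word over $\Sigma_w$ is freely reduced if it has no factor $x\bar x$. Britton reductions are the rules $a^ka^m\to a^{k+m}$ ($a\in V(Y)$, $k,m\neq0$) and $y\,b^{\beta_y m}\bar y\to a^{\alpha_y m}$ ($a=\iota(y)$, $b=\tau(y)$, $m\in\mathbb{Z}$); a word is Britton-reduced if none applies. *)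

theory Defs
  imports Main "HOL.Rat"
begin

definition gbs_graph ::
  "'v set \<Rightarrow> 'e set \<Rightarrow> ('e \<Rightarrow> 'v) \<Rightarrow> ('e \<Rightarrow> 'v) \<Rightarrow> ('e \<Rightarrow> 'e) \<Rightarrow> ('e \<Rightarrow> int) \<Rightarrow> ('e \<Rightarrow> int) \<Rightarrow> bool"
where
  "gbs_graph V E iota tau bar alpha beta \<longleftrightarrow>
     finite V \<and> finite E \<and>
     (\<forall>y\<in>E. iota y \<in> V \<and> tau y \<in> V \<and> bar y \<in> E \<and> bar y \<noteq> y \<and> bar (bar y) = y \<and>
             iota (bar y) = tau y \<and> alpha y \<noteq> 0 \<and> beta y \<noteq> 0 \<and> alpha y = beta (bar y)) \<and>
     (\<forall>a\<in>V. \<forall>b\<in>V. (a, b) \<in> {(iota y, tau y) | y. y \<in> E}\<^sup>*)"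

definition orientation :: "'e set \<Rightarrow> ('e \<Rightarrow> 'e) \<Rightarrow> 'e set \<Rightarrow> bool" where
  "orientation E bar D \<longleftrightarrow> D \<subseteq> E \<and> (\<forall>y\<in>E. y \<in> D \<longleftrightarrow> bar y \<notin> D)"

datatype ('v, 'e) gen = GV 'v | GE 'e

type_synonym ('v, 'e) letter = "('v, 'e) gen \<times> bool"  \<comment> \<open>True = positive exponent\<close>

definition inv_letter :: "('v, 'e) letter \<Rightarrow> ('v, 'e) letter" where
  "inv_letter x = (fst x, \<not> snd x)"

definition powl :: "'v \<Rightarrow> int \<Rightarrow> ('v, 'e) letter list" where
  "powl a k = replicate (nat \<bar>k\<bar>) (GV a, k > 0)"

definition relators ::
  "'e set \<Rightarrow> ('e \<Rightarrow> 'v) \<Rightarrow> ('e \<Rightarrow> 'v) \<Rightarrow> ('e \<Rightarrow> 'e) \<Rightarrow> ('e \<Rightarrow> int) \<Rightarrow> ('e \<Rightarrow> int) \<Rightarrow> ('v, 'e) letter list set"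
where
  "relators E iota tau bar alpha beta =
     {[(GE (bar y), True), (GE y, True)] | y. y \<in> E} \<union>
     {[(GE y, True)] @ powl (tau y) (beta y) @ [(GE (bar y), True)] @ powl (iota y) (- alpha y) | y. y \<in> E}"

definition pres_step ::
  "'e set \<Rightarrow> ('e \<Rightarrow> 'v) \<Rightarrow> ('e \<Rightarrow> 'v) \<Rightarrow> ('e \<Rightarrow> 'e) \<Rightarrow> ('e \<Rightarrow> int) \<Rightarrow> ('e \<Rightarrow> int) \<Rightarrow> (('v, 'e) letter list \<times> ('v, 'e) letter list) set"
where
  "pres_step E iota tau bar alpha beta =
     {(u @ [x, inv_letter x] @ v, u @ v) | u x v. True} \<union>
     {(u @ r @ v, u @ v) | u r v. r \<in> relators E iota tau bar alpha beta}"

definition FG_eq ::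
  "'e set \<Rightarrow> ('e \<Rightarrow> 'v) \<Rightarrow> ('e \<Rightarrow> 'v) \<Rightarrow> ('e \<Rightarrow> 'e) \<Rightarrow> ('e \<Rightarrow> int) \<Rightarrow> ('e \<Rightarrow> int) \<Rightarrow> ('v, 'e) letter list \<Rightarrow> ('v, 'e) letter list \<Rightarrow> bool"
where
  "FG_eq E iota tau bar alpha beta u v \<longleftrightarrow>
     (u, v) \<in> (pres_step E iota tau bar alpha beta \<union> (pres_step E iota tau bar alpha beta)\<inverse>)\<^sup>*"

datatype ('v, 'e) syl = SP 'v int | SE 'e

definition pw :: "'v \<Rightarrow> int \<Rightarrow> ('v, 'e) syl list" where
  "pw a k = (if k = 0 then [] else [SP a k])"

fun syl_letters :: "('v, 'e) syl \<Rightarrow> ('v, 'e) letter list" where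
  "syl_letters (SP a k) = powl a k"
| "syl_letters (SE y) = [(GE y, True)]"

definition letters :: "('v, 'e) syl list \<Rightarrow> ('v, 'e) letter list" where
  "letters ws = concat (map syl_letters ws)"

text \<open>The factorization a0^k0 y1 a1^k1 ... yn an^kn, given by a0, k0 and the list
  [(y1,k1),...,(yn,kn)]; the vertex a_i is tau(y_i).\<close>
definition fact_word :: "('e \<Rightarrow> 'v) \<Rightarrow> 'v \<Rightarrow> int \<Rightarrow> ('e \<times> int) list \<Rightarrow> ('v, 'e) syl list" where
  "fact_word tau a0 k0 ps = pw a0 k0 @ concat (map (\<lambda>(e, m). SE e # pw (tau e) m) ps)"

definition is_factorization ::
  "'v set \<Rightarrow> 'e set \<Rightarrow> ('e \<Rightarrow> 'v) \<Rightarrow> ('e \<Rightarrow> 'v) \<Rightarrow> 'v \<Rightarrow> ('e \<times> int) list \<Rightarrow> bool"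
where
  "is_factorization V E iota tau a0 ps \<longleftrightarrow>
     a0 \<in> V \<and> (\<forall>p\<in>set ps. fst p \<in> E) \<and>
     (\<forall>l < length ps. iota (fst (ps ! l)) = (if l = 0 then a0 else tau (fst (ps ! (l - 1))))) \<and>
     (ps \<noteq> [] \<longrightarrow> tau (fst (last ps)) = a0)"

definition britton_step ::
  "'e set \<Rightarrow> ('e \<Rightarrow> 'v) \<Rightarrow> ('e \<Rightarrow> 'v) \<Rightarrow> ('e \<Rightarrow> 'e) \<Rightarrow> ('e \<Rightarrow> int) \<Rightarrow> ('e \<Rightarrow> int) \<Rightarrow> (('v, 'e) syl list \<times> ('v, 'e) syl list) set"
where
  "britton_step E iota tau bar alpha beta =
     {(u @ [SP a k, SP a m] @ v, u @ pw a (k + m) @ v) | u a k m v. k \<noteq> 0 \<and> m \<noteq> 0} \<union>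
     {(u @ [SE y] @ pw (tau y) (beta y * m) @ [SE (bar y)] @ v, u @ pw (iota y) (alpha y * m) @ v)
        | u y m v. y \<in> E}"

definition britton_reduced ::
  "'e set \<Rightarrow> ('e \<Rightarrow> 'v) \<Rightarrow> ('e \<Rightarrow> 'v) \<Rightarrow> ('e \<Rightarrow> 'e) \<Rightarrow> ('e \<Rightarrow> int) \<Rightarrow> ('e \<Rightarrow> int) \<Rightarrow> ('v, 'e) syl list \<Rightarrow> bool"
where
  "britton_reduced E iota tau bar alpha beta ws \<longleftrightarrow>
     \<not> (\<exists>ws'. (ws, ws') \<in> britton_step E iota tau bar alpha beta)"

definition kij :: "('e \<Rightarrow> int) \<Rightarrow> ('e \<Rightarrow> int) \<Rightarrow> (nat \<Rightarrow> int) \<Rightarrow> (nat \<Rightarrow> 'e) \<Rightarrow> nat \<Rightarrow> nat \<Rightarrow> rat" where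
  "kij alpha beta k y i j =
     (\<Sum>\<nu>\<in>{i..j}. of_int (k \<nu>) * (\<Prod>\<mu>\<in>{i+1..\<nu>}. of_int (alpha (y \<mu>)) / of_int (beta (y \<mu>))))"

definition rho :: "'e set \<Rightarrow> ('e \<Rightarrow> 'e) \<Rightarrow> (nat \<Rightarrow> 'e) \<Rightarrow> nat \<Rightarrow> nat \<Rightarrow> 'e \<Rightarrow> int" where
  "rho D bar y i j e =
     (if e \<in> D then int (card {\<mu>. i < \<mu> \<and> \<mu> \<le> j \<and> y \<mu> = e}) - int (card {\<mu>. i < \<mu> \<and> \<mu> \<le> j \<and> y \<mu> = bar e})
      else 0)"

definition simC_cond ::
  "'e set \<Rightarrow> ('e \<Rightarrow> 'e) \<Rightarrow> ('e \<Rightarrow> int) \<Rightarrow> ('e \<Rightarrow> int) \<Rightarrow> (nat \<Rightarrow> int) \<Rightarrow> (nat \<Rightarrow> 'e) \<Rightarrow> nat \<Rightarrow> nat \<Rightarrow> bool"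
where
  "simC_cond D bar alpha beta k y i j \<longleftrightarrow>
     rho D bar y i (j - 1) = (\<lambda>_. 0) \<and>
     (\<exists>m::int. kij alpha beta k y i (j - 1) = of_int (beta (y i) * m))"

definition simC ::
  "'e set \<Rightarrow> ('e \<Rightarrow> 'e) \<Rightarrow> ('e \<Rightarrow> int) \<Rightarrow> ('e \<Rightarrow> int) \<Rightarrow> nat \<Rightarrow> (nat \<Rightarrow> int) \<Rightarrow> (nat \<Rightarrow> 'e) \<Rightarrow> nat \<Rightarrow> nat \<Rightarrow> bool"
where
  "simC D bar alpha beta n k y i j \<longleftrightarrow>
     i \<in> {1..n} \<and> j \<in> {1..n} \<and> y i = bar (y j) \<and>
     (if i < j then simC_cond D bar alpha beta k y i j
      else j < i \<and> simC_cond D bar alpha beta k y j i)"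

definition approxC ::
  "'e set \<Rightarrow> ('e \<Rightarrow> 'e) \<Rightarrow> ('e \<Rightarrow> int) \<Rightarrow> ('e \<Rightarrow> int) \<Rightarrow> nat \<Rightarrow> (nat \<Rightarrow> int) \<Rightarrow> (nat \<Rightarrow> 'e) \<Rightarrow> nat \<Rightarrow> nat \<Rightarrow> bool"
where
  "approxC D bar alpha beta n k y i j \<longleftrightarrow>
     i = j \<or> (\<exists>l. simC D bar alpha beta n k y i l \<and> simC D bar alpha beta n k y l j)"

definition cls ::
  "'e set \<Rightarrow> ('e \<Rightarrow> 'e) \<Rightarrow> ('e \<Rightarrow> int) \<Rightarrow> ('e \<Rightarrow> int) \<Rightarrow> nat \<Rightarrow> (nat \<Rightarrow> int) \<Rightarrow> (nat \<Rightarrow> 'e) \<Rightarrow> nat \<Rightarrow> nat set"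
where
  "cls D bar alpha beta n k y i = {j \<in> {1..n}. approxC D bar alpha beta n k y i j}"

text \<open>Elements of Sigma_w: (C, False) is the class C itself; (C, True) is the new element
  bar C added for a class C without a partner.  The involution on Sigma_w:\<close>
definition sigma_bar ::
  "'e set \<Rightarrow> ('e \<Rightarrow> 'e) \<Rightarrow> ('e \<Rightarrow> int) \<Rightarrow> ('e \<Rightarrow> int) \<Rightarrow> nat \<Rightarrow> (nat \<Rightarrow> int) \<Rightarrow> (nat \<Rightarrow> 'e) \<Rightarrow> nat set \<times> bool \<Rightarrow> nat set \<times> bool"
where
  "sigma_bar D bar alpha beta n k y x =
     (if snd x then (fst x, False)
      else if \<exists>i\<in>fst x. \<exists>j. simC D bar alpha beta n k y i j
      then (cls D bar alpha beta n k y (SOME j. \<exists>i\<in>fst x. simC D bar alpha beta n k y i j), False)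
      else (fst x, True))"

text \<open>Free group over an alphabet with a fixed-point-free involution invol (free group on
  one representative of each pair, with bar x = x^-1).\<close>
definition free_step :: "('a \<Rightarrow> 'a) \<Rightarrow> ('a list \<times> 'a list) set" where
  "free_step invol = {(u @ [x, invol x] @ v, u @ v) | u x v. True}"

definition free_eq :: "('a \<Rightarrow> 'a) \<Rightarrow> 'a list \<Rightarrow> 'a list \<Rightarrow> bool" where
  "free_eq invol u v \<longleftrightarrow> (u, v) \<in> (free_step invol \<union> (free_step invol)\<inverse>)\<^sup>*"

definition freely_reduced :: "('a \<Rightarrow> 'a) \<Rightarrow> 'a list \<Rightarrow> bool" where
  "freely_reduced invol xs \<longleftrightarrow> \<not> (\<exists>u x v. xs = u @ [x, invol x] @ v)"

text \<open>Given the chosen indices idx = [i_1,...,i_j] (and i_0 = 0), the exponent of the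
  l-th vertex syllable of w-hat (l = 0..j) is k_{i_l, i_{l+1}-1}, with i_{j+1}-1 = n.\<close>
definition hat_start :: "nat list \<Rightarrow> nat \<Rightarrow> nat" where
  "hat_start idx l = (if l = 0 then 0 else idx ! (l - 1))"

definition hat_end :: "nat \<Rightarrow> nat list \<Rightarrow> nat \<Rightarrow> nat" where
  "hat_end n idx l = (if l < length idx then idx ! l - 1 else n)"

end

theory Submission
  imports Defs
begin


locale gbs_setting =
  fixes V :: "'v set" and E :: "'e set" and iota tau :: "'e \<Rightarrow> 'v" and bar :: "'e \<Rightarrow> 'e"
    and alpha beta :: "'e \<Rightarrow> int" and D :: "'e set"
    and a0 :: 'v and n :: nat and k :: "nat \<Rightarrow> int" and y :: "nat \<Rightarrow> 'e"
  assumes G: "gbs_graph V E iota tau bar alpha beta"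
    and Dor: "orientation E bar D"
    and w: "is_factorization V E iota tau a0 (map (\<lambda>i. (y i, k i)) [1..<n+1])"
begin

lemma eE: assumes "e \<in> E"
  shows "bar e \<in> E" "bar e \<noteq> e" "bar (bar e) = e" "iota (bar e) = tau e"
    "alpha e \<noteq> 0" "beta e \<noteq> 0" "alpha e = beta (bar e)" "beta e = alpha (bar e)"
    "tau (bar e) = iota e"
proof -
  have H: "\<forall>y\<in>E. iota y \<in> V \<and> tau y \<in> V \<and> bar y \<in> E \<and> bar y \<noteq> y \<and> bar (bar y) = y \<and>
             iota (bar y) = tau y \<and> alpha y \<noteq> 0 \<and> beta y \<noteq> 0 \<and> alpha y = beta (bar y)"
    using G unfolding gbs_graph_def by blast
  show "bar e \<in> E" "bar e \<noteq> e" "bar (bar e) = e" "iota (bar e) = tau e"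
    "alpha e \<noteq> 0" "beta e \<noteq> 0" "alpha e = beta (bar e)" using H assms by auto
  have "alpha (bar e) = beta (bar (bar e))" using H assms by auto
  then show "beta e = alpha (bar e)" using H assms by auto
  have be: "bar e \<in> E" "bar (bar e) = e" using H assms by auto
  from H be(1) have "iota (bar (bar e)) = tau (bar e)" by blast
  then show "tau (bar e) = iota e" using be(2) by simp
qed

lemma finE: "finite E" using G unfolding gbs_graph_def by blast

lemma DE: "D \<subseteq> E" and Dbar: "e \<in> E \<Longrightarrow> e \<in> D \<longleftrightarrow> bar e \<notin> D"
  using Dor unfolding orientation_def by blast+

lemma finD: "finite D" using DE finE finite_subset by blast

lemma wlen: "length (map (\<lambda>i. (y i, k i)) [1..<n+1]) = n" by simp

lemma wmap: "map (\<lambda>i. (y i, k i)) [1..<n+1] ! l = (y (Suc l), k (Suc l))" if "l < n"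
  using that by (simp del: upt_Suc)

lemma yE: assumes "1 \<le> i" "i \<le> n" shows "y i \<in> E"
proof -
  have "\<forall>p\<in>set (map (\<lambda>i. (y i, k i)) [1..<n+1]). fst p \<in> E"
    using w unfolding is_factorization_def by blast
  moreover have "(y i, k i) \<in> set (map (\<lambda>i. (y i, k i)) [1..<n+1])"
    using assms by (auto simp del: upt_Suc)
  ultimately show ?thesis by fastforce
qed

lemma a0V: "a0 \<in> V" using w unfolding is_factorization_def by blast

definition vtx :: "nat \<Rightarrow> 'v" where "vtx i = (if i = 0 then a0 else tau (y i))"

lemma iota_y: assumes "1 \<le> i" "i \<le> n" shows "iota (y i) = vtx (i - 1)"
proof -
  define M where "M = map (\<lambda>i. (y i, k i)) [1..<n+1]"
  have H0: "\<forall>l < length M. iota (fst (M ! l)) = (if l = 0 then a0 else tau (fst (M ! (l - 1))))"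
    using w unfolding is_factorization_def M_def by blast
  have "length M = n" unfolding M_def by (rule wlen)
  with H0 have H: "\<forall>l < n. iota (fst (M ! l)) = (if l = 0 then a0 else tau (fst (M ! (l - 1))))" by simp
  have l: "i - 1 < n" using assms by simp
  have A: "iota (fst (M ! (i - 1))) = (if i - 1 = 0 then a0 else tau (fst (M ! (i - 1 - 1))))"
    using H l by blast
  have B: "M ! (i - 1) = (y i, k i)"
    using wmap[OF l] assms unfolding M_def by simp
  show ?thesis
  proof (cases "i = 1")
    case True then show ?thesis using A B by (simp add: vtx_def)
  next
    case False
    then have a: "i - 1 \<noteq> 0" using assms by simp_all
    have "i - 1 - 1 < n" using l by simp
    from wmap[OF this] have "M ! (i - 1 - 1) = (y (Suc (i - 1 - 1)), k (Suc (i - 1 - 1)))"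
      unfolding M_def .
    moreover have "Suc (i - 1 - 1) = i - 1" using a by simp
    ultimately have "M ! (i - 1 - 1) = (y (i - 1), k (i - 1))" by (simp only:)
    then show ?thesis using A B a by (simp add: vtx_def)
  qed
qed

lemma tau_last: assumes "n > 0" shows "tau (y n) = a0"
proof -
  have "map (\<lambda>i. (y i, k i)) [1..<n+1] \<noteq> []" using assms by simp
  then have "tau (fst (last (map (\<lambda>i. (y i, k i)) [1..<n+1]))) = a0"
    using w unfolding is_factorization_def by blast
  moreover have "last (map (\<lambda>i. (y i, k i)) [1..<n+1]) = (y n, k n)"
  proof -
    have "[1..<n+1] = [1..<n] @ [n]" using assms by (simp del: upt_Suc add: upt_Suc_append)
    then show ?thesis by (simp del: upt_Suc)
  qed
  ultimately show ?thesis by simp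
qed

definition r :: "'e \<Rightarrow> rat" where "r e = of_int (alpha e) / of_int (beta e)"

lemma r_nz: assumes "e \<in> E" shows "r e \<noteq> 0"
proof -
  have "alpha e \<noteq> 0" "beta e \<noteq> 0" using eE(5,6)[OF assms] .
  then show ?thesis unfolding r_def by simp
qed

lemma r_bar: assumes "e \<in> E" shows "r (bar e) * r e = 1"
proof -
  have "alpha e \<noteq> 0" "beta e \<noteq> 0" using eE(5,6)[OF assms] .
  moreover have "alpha (bar e) = beta e" "beta (bar e) = alpha e" using eE(7,8)[OF assms] by simp_all
  ultimately show ?thesis unfolding r_def by simp
qed

lemma r_beta: assumes "e \<in> E" shows "r e * of_int (beta e) = of_int (alpha e)"
proof -
  have "beta e \<noteq> 0" using eE(6)[OF assms] .
  then show ?thesis unfolding r_def by simp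
qed

definition Pi :: "nat \<Rightarrow> nat \<Rightarrow> rat" where "Pi i j = (\<Prod>\<mu>\<in>{i+1..j}. r (y \<mu>))"

lemma Pi_Suc: "i \<le> j \<Longrightarrow> Pi i (Suc j) = Pi i j * r (y (Suc j))"
proof -
  assume "i \<le> j"
  then have "{i+1..Suc j} = insert (Suc j) {i+1..j}" by auto
  then show ?thesis unfolding Pi_def by (simp add: mult.commute)
qed

lemma Pi_self: "Pi i i = 1" unfolding Pi_def by simp

lemma Pi_split: assumes "i \<le> m" "m \<le> j" shows "Pi i j = Pi i m * Pi m j"
  using assms(2)
proof (induction j rule: dec_induct)
  case base then show ?case by (simp add: Pi_self)
next
  case (step j) then show ?case using assms(1) by (simp add: Pi_Suc)
qed

lemma Pi_nz: assumes "j \<le> n" shows "Pi i j \<noteq> 0"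
proof -
  have "\<forall>x\<in>{i+1..j}. r (y x) \<noteq> 0" using r_nz yE assms by simp
  then show ?thesis unfolding Pi_def by simp
qed

definition F :: "nat \<Rightarrow> rat" where "F j = (\<Sum>\<nu>\<in>{0..<j}. of_int (k \<nu>) * Pi 0 \<nu>)"

abbreviation K where "K \<equiv> kij alpha beta k y"

lemma K_Pi: "K i j = (\<Sum>\<nu>\<in>{i..j}. of_int (k \<nu>) * Pi i \<nu>)"
  unfolding kij_def Pi_def r_def by simp

lemma K_F: assumes "i \<le> Suc j" shows "K i j * Pi 0 i = F (Suc j) - F i"
proof -
  have "F (Suc j) = F i + (\<Sum>\<nu>\<in>{i..<Suc j}. of_int (k \<nu>) * Pi 0 \<nu>)"
    unfolding F_def by (rule sum.atLeastLessThan_concat[symmetric]) (use assms in auto)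
  moreover have "(\<Sum>\<nu>\<in>{i..<Suc j}. of_int (k \<nu>) * Pi 0 \<nu>) = (\<Sum>\<nu>\<in>{i..j}. of_int (k \<nu>) * Pi i \<nu>) * Pi 0 i"
    unfolding sum_distrib_right atLeastLessThanSuc_atLeastAtMost
  proof (rule sum.cong)
    fix x assume "x \<in> {i..j}"
    then have "Pi 0 x = Pi 0 i * Pi i x" using Pi_split[of 0 i x] by simp
    then show "of_int (k x) * Pi 0 x = of_int (k x) * Pi i x * Pi 0 i" by simp
  qed simp
  ultimately show ?thesis using K_Pi by simp
qed

definition u :: "nat \<Rightarrow> rat" where "u i = F i / (Pi 0 i * of_int (beta (y i)))"

lemma F_u: "1 \<le> i \<Longrightarrow> i \<le> n \<Longrightarrow> F i = u i * Pi 0 i * of_int (beta (y i))"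
  unfolding u_def using Pi_nz[of i 0] eE(6)[OF yE] by simp

end


context gbs_setting begin

definition P :: "nat \<Rightarrow> 'e \<Rightarrow> int" where "P j = rho D bar y 0 j"

definition dl :: "'e \<Rightarrow> 'e \<Rightarrow> int" where
  "dl z e = (if e \<in> D then (if z = e then 1 else 0) - (if z = bar e then 1 else 0) else 0)"

lemma card_step:
  assumes "i \<le> j"
  shows "int (card {\<mu>. i < \<mu> \<and> \<mu> \<le> Suc j \<and> y \<mu> = c}) =
         int (card {\<mu>. i < \<mu> \<and> \<mu> \<le> j \<and> y \<mu> = c}) + (if y (Suc j) = c then 1 else 0)"
proof -
  let ?S = "{\<mu>. i < \<mu> \<and> \<mu> \<le> j \<and> y \<mu> = c}"
  have fin: "finite ?S" by (rule finite_subset[of _ "{..j}"]) auto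
  have nin: "Suc j \<notin> ?S" by simp
  show ?thesis
  proof (cases "y (Suc j) = c")
    case True
    then have "{\<mu>. i < \<mu> \<and> \<mu> \<le> Suc j \<and> y \<mu> = c} = insert (Suc j) ?S"
      using assms by (auto simp: le_Suc_eq)
    then show ?thesis using fin nin True by simp
  next
    case False
    then have "{\<mu>. i < \<mu> \<and> \<mu> \<le> Suc j \<and> y \<mu> = c} = ?S"
      using assms by (auto simp: le_Suc_eq)
    then show ?thesis using False by simp
  qed
qed

lemma rho_Suc: "i \<le> j \<Longrightarrow> rho D bar y i (Suc j) e = rho D bar y i j e + dl (y (Suc j)) e"
  unfolding rho_def dl_def using card_step[of i j e] card_step[of i j "bar e"] by simp

lemma rho_self: "rho D bar y i i = (\<lambda>e. 0)"
proof -
  have "\<And>c. {\<mu>. i < \<mu> \<and> \<mu> \<le> i \<and> y \<mu> = c} = {}" by auto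
  then show ?thesis unfolding rho_def by (intro ext) (simp del: Collect_empty_eq)
qed

lemma rho_diff: assumes "i \<le> j" shows "rho D bar y i j = (\<lambda>e. P j e - P i e)"
  using assms
proof (induction j rule: dec_induct)
  case base then show ?case by (simp add: rho_self)
next
  case (step j)
  show ?case
  proof
    fix e
    have "rho D bar y i (Suc j) e = rho D bar y i j e + dl (y (Suc j)) e" using rho_Suc step(1) .
    moreover have "P (Suc j) e = P j e + dl (y (Suc j)) e" unfolding P_def using rho_Suc[of 0 j] by simp
    ultimately show "rho D bar y i (Suc j) e = P (Suc j) e - P i e" using step(3) by (simp add: fun_eq_iff)
  qed
qed

lemma P_Suc: "P (Suc j) = (\<lambda>e. P j e + dl (y (Suc j)) e)"
  unfolding P_def using rho_Suc[of 0 j] by (simp add: fun_eq_iff)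

lemma P0: "P 0 = (\<lambda>e. 0)" unfolding P_def by (rule rho_self)

lemma dl_bar: assumes "z \<in> E" shows "dl (bar z) e = - dl z e"
proof (cases "e \<in> D")
  case True
  then have eE': "e \<in> E" using DE by blast
  have 1: "bar z = e \<longleftrightarrow> z = bar e" using eE(3)[OF assms] eE(3)[OF eE'] by metis
  have 2: "bar z = bar e \<longleftrightarrow> z = e" using eE(3)[OF assms] eE(3)[OF eE'] by metis
  show ?thesis unfolding dl_def using True 1 2 by simp
next
  case False then show ?thesis unfolding dl_def by simp
qed

definition Q :: "nat \<Rightarrow> rat" where "Q j = (\<Prod>e\<in>D. r e powi (P j e))"

lemma prod_dl: assumes "z \<in> E" shows "(\<Prod>e\<in>D. r e powi dl z e) = r z"
proof (cases "z \<in> D")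
  case True
  have "\<And>e. e \<in> D \<Longrightarrow> r e powi dl z e = (if z = e then r e else 1)"
  proof -
    fix e assume e: "e \<in> D"
    then have "z \<noteq> bar e" using True Dbar DE by blast
    then show "r e powi dl z e = (if z = e then r e else 1)" unfolding dl_def using e by simp
  qed
  then have "(\<Prod>e\<in>D. r e powi dl z e) = (\<Prod>e\<in>D. (if z = e then r e else 1))"
    by (rule prod.cong[OF refl])
  also have "\<dots> = r z" using True finD by simp
  finally show ?thesis .
next
  case False
  then have bz: "bar z \<in> D" using Dbar assms by blast
  have "\<And>e. e \<in> D \<Longrightarrow> r e powi dl z e = (if bar z = e then inverse (r e) else 1)"
  proof -
    fix e assume e: "e \<in> D"
    then have e': "e \<in> E" using DE by blast
    have "z \<noteq> e" using False e by blast
    moreover have "z = bar e \<longleftrightarrow> bar z = e" using eE(3)[OF assms] eE(3)[OF e'] by metis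
    ultimately show "r e powi dl z e = (if bar z = e then inverse (r e) else 1)" unfolding dl_def using e by simp
  qed
  then have "(\<Prod>e\<in>D. r e powi dl z e) = (\<Prod>e\<in>D. (if bar z = e then inverse (r e) else 1))"
    by (rule prod.cong[OF refl])
  also have "\<dots> = inverse (r (bar z))" using bz finD by simp
  also have "\<dots> = r z" using r_bar[OF assms] by (rule inverse_unique)
  finally show ?thesis .
qed

lemma Pi0_Q: "j \<le> n \<Longrightarrow> Pi 0 j = Q j"
proof (induction j)
  case 0 then show ?case by (simp add: Pi_self Q_def P0)
next
  case (Suc j)
  have z: "y (Suc j) \<in> E" using yE Suc(2) by simp
  have "Q (Suc j) = (\<Prod>e\<in>D. r e powi (P j e) * r e powi dl (y (Suc j)) e)"
    unfolding Q_def P_Suc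
  proof (rule prod.cong[OF refl])
    fix e assume "e \<in> D"
    then have "r e \<noteq> 0" using r_nz DE by blast
    then show "r e powi (P j e + dl (y (Suc j)) e) = r e powi (P j e) * r e powi dl (y (Suc j)) e"
      by (simp add: power_int_add)
  qed
  also have "\<dots> = Q j * r (y (Suc j))" unfolding Q_def prod.distrib prod_dl[OF z] ..
  finally show ?case using Suc by (simp add: Pi_Suc)
qed

lemma Pi0_eq: "P i = P j \<Longrightarrow> i \<le> n \<Longrightarrow> j \<le> n \<Longrightarrow> Pi 0 i = Pi 0 j"
  using Pi0_Q unfolding Q_def by simp

end


context gbs_setting begin

abbreviation N where "N \<equiv> {1..n}"

definition opp :: "nat \<Rightarrow> nat \<Rightarrow> bool" where
  "opp i j \<longleftrightarrow> y i = bar (y j) \<and> P i = P (j - 1) \<and> P (i - 1) = P j \<and> u i - u j \<in> \<int>"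

definition same :: "nat \<Rightarrow> nat \<Rightarrow> bool" where
  "same i j \<longleftrightarrow> y i = y j \<and> P i = P j \<and> P (i - 1) = P (j - 1) \<and> u i - u j \<in> \<int>"

lemma P_pred: "1 \<le> i \<Longrightarrow> P i = (\<lambda>e. P (i - 1) e + dl (y i) e)"
  using P_Suc[of "i - 1"] by simp

lemma opp_aux:
  assumes "i \<in> N" "j \<in> N" "y i = bar (y j)" "P i = P (j - 1)"
  shows "P (i - 1) = P j"
proof
  fix e
  have "P (i - 1) e = P i e - dl (y i) e" using P_pred[of i] assms(1) by simp
  also have "\<dots> = P (j - 1) e + dl (y j) e" using assms(3,4) dl_bar[OF yE[of j]] assms(2) by simp
  also have "\<dots> = P j e" using P_pred[of j] assms(2) by simp
  finally show "P (i - 1) e = P j e" .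
qed

lemma kcond:
  assumes "i < j" "i \<in> N" "j \<in> N" "y i = bar (y j)" "P i = P (j - 1)"
  shows "K i (j - 1) = (u j - u i) * of_int (beta (y i))"
proof -
  have yj: "y j \<in> E" and yi: "y i \<in> E" using yE assms(2,3) by auto
  have "K i (j - 1) * Pi 0 i = F (Suc (j - 1)) - F i" using K_F[of i "j - 1"] assms by simp
  also have "Suc (j - 1) = j" using assms by simp
  finally have 1: "K i (j - 1) * Pi 0 i = F j - F i" .
  have "Pi 0 j = Pi 0 (j - 1) * r (y j)" using Pi_Suc[of 0 "j - 1"] assms by simp
  also have "Pi 0 (j - 1) = Pi 0 i" using Pi0_eq[of i "j - 1"] assms by simp
  finally have 2: "Pi 0 j = Pi 0 i * r (y j)" .
  have 3: "r (y j) * of_int (beta (y j)) = of_int (beta (y i))"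
    using r_beta[OF yj] eE(7)[OF yj] assms(4) by simp
  have "F j = u j * Pi 0 i * of_int (beta (y i))"
    using F_u[of j] assms 2 3 by (simp add: mult.assoc)
  moreover have "F i = u i * Pi 0 i * of_int (beta (y i))" using F_u[of i] assms by simp
  ultimately have "K i (j - 1) * Pi 0 i = (u j - u i) * of_int (beta (y i)) * Pi 0 i"
    using 1 by (simp add: algebra_simps)
  moreover have "Pi 0 i \<noteq> 0" using Pi_nz assms by simp
  ultimately show ?thesis by simp
qed

lemma kcond_iff:
  assumes "i < j" "i \<in> N" "j \<in> N" "y i = bar (y j)" "P i = P (j - 1)"
  shows "(\<exists>m::int. K i (j - 1) = of_int (beta (y i) * m)) \<longleftrightarrow> u i - u j \<in> \<int>"
proof -
  have b: "beta (y i) \<noteq> 0" using eE(6) yE assms(2) by simp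
  have "(\<exists>m::int. K i (j - 1) = of_int (beta (y i) * m)) \<longleftrightarrow> (\<exists>m::int. u j - u i = of_int m)"
    unfolding kcond[OF assms] using b by (auto simp: mult.commute)
  also have "\<dots> \<longleftrightarrow> u j - u i \<in> \<int>" by (auto elim: Ints_cases)
  also have "\<dots> \<longleftrightarrow> u i - u j \<in> \<int>"
    using Ints_minus[of "u j - u i"] Ints_minus[of "u i - u j"] by auto
  finally show ?thesis .
qed

lemma bar_bar: "e \<in> E \<Longrightarrow> bar (bar e) = e" using eE(3) .

lemma opp_sym: assumes "i \<in> N" "j \<in> N" "opp i j" shows "opp j i"
proof -
  have "y j = bar (y i)" using assms bar_bar[OF yE[of j]] unfolding opp_def by auto
  moreover have "u j - u i \<in> \<int>" using assms Ints_minus[of "u i - u j"] unfolding opp_def by auto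
  ultimately show ?thesis using assms unfolding opp_def by auto
qed

lemma cond_iff:
  assumes "i < j" "i \<in> N" "j \<in> N" "y i = bar (y j)"
  shows "simC_cond D bar alpha beta k y i j \<longleftrightarrow> opp i j"
proof -
  have rd: "rho D bar y i (j - 1) = (\<lambda>e. P (j - 1) e - P i e)" using rho_diff[of i "j - 1"] assms by simp
  have "rho D bar y i (j - 1) = (\<lambda>_. 0) \<longleftrightarrow> P i = P (j - 1)"
    unfolding rd by (auto simp: fun_eq_iff)
  then show ?thesis unfolding simC_cond_def opp_def
    using kcond_iff[OF assms] opp_aux[OF assms(2,3,4)] assms(4) by blast
qed

lemma simC_iff: "simC D bar alpha beta n k y i j \<longleftrightarrow> i \<in> N \<and> j \<in> N \<and> opp i j"
proof (cases "i \<in> N \<and> j \<in> N")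
  case False then show ?thesis unfolding simC_def by auto
next
  case True
  then have iN: "i \<in> N" and jN: "j \<in> N" by auto
  show ?thesis
  proof (cases "y i = bar (y j)")
    case False
    moreover have "opp i j \<Longrightarrow> y i = bar (y j)" unfolding opp_def by simp
    ultimately show ?thesis unfolding simC_def by auto
  next
    case yb: True
    then have yb': "y j = bar (y i)" using bar_bar[OF yE[of j]] jN by auto
    have ij: "i \<noteq> j" using yb eE(2)[OF yE[of j]] jN by auto
    show ?thesis
    proof (cases "i < j")
      case True
      then show ?thesis unfolding simC_def using cond_iff[OF True iN jN yb] iN jN yb by auto
    next
      case False
      then have ji: "j < i" using ij by simp
      have "simC D bar alpha beta n k y i j \<longleftrightarrow> opp j i"
        unfolding simC_def using cond_iff[OF ji jN iN yb'] iN jN yb False ji by auto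
      also have "\<dots> \<longleftrightarrow> opp i j" using opp_sym iN jN by blast
      finally show ?thesis using iN jN by simp
    qed
  qed
qed

lemma opp_opp: assumes "i \<in> N" "l \<in> N" "j \<in> N" "opp i l" "opp l j" shows "same i j"
proof -
  have "y i = y j" using assms bar_bar[OF yE[of j]] unfolding opp_def by auto
  moreover have "u i - u j \<in> \<int>"
    using Ints_add[of "u i - u l" "u l - u j"] assms unfolding opp_def by auto
  ultimately show ?thesis using assms unfolding opp_def same_def by auto
qed

lemma same_opp: assumes "same i j" "opp j l" shows "opp i l"
proof -
  have "u i - u l \<in> \<int>"
    using Ints_add[of "u i - u j" "u j - u l"] assms unfolding opp_def same_def by auto
  then show ?thesis using assms unfolding opp_def same_def by auto
qed

lemma opp_same: assumes "opp i j" "same j l" shows "opp i l"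
proof -
  have "u i - u l \<in> \<int>"
    using Ints_add[of "u i - u j" "u j - u l"] assms unfolding opp_def same_def by auto
  then show ?thesis using assms unfolding opp_def same_def by auto
qed

lemma same_refl: "same i i" unfolding same_def by simp

lemma same_sym: "same i j \<Longrightarrow> same j i"
  unfolding same_def using Ints_minus[of "u i - u j"] by auto

lemma same_trans: "same i j \<Longrightarrow> same j l \<Longrightarrow> same i l"
  unfolding same_def using Ints_add[of "u i - u j" "u j - u l"] by auto

definition hasp :: "nat \<Rightarrow> bool" where "hasp i \<longleftrightarrow> (\<exists>l\<in>N. opp i l)"

abbreviation cl where "cl \<equiv> cls D bar alpha beta n k y"

lemma cls_eq: assumes "i \<in> N" shows "cl i = (if hasp i then {j\<in>N. same i j} else {i})"
proof (cases "hasp i")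
  case True
  then obtain l where l: "l \<in> N" "opp i l" unfolding hasp_def by blast
  have "j \<in> cl i \<longleftrightarrow> j \<in> N \<and> same i j" for j
  proof
    assume "j \<in> cl i"
    then have jN: "j \<in> N" and "approxC D bar alpha beta n k y i j" unfolding cls_def by auto
    then have "i = j \<or> (\<exists>l. simC D bar alpha beta n k y i l \<and> simC D bar alpha beta n k y l j)"
      unfolding approxC_def by simp
    then show "j \<in> N \<and> same i j"
    proof
      assume "i = j" then show ?thesis using jN same_refl by simp
    next
      assume "\<exists>l. simC D bar alpha beta n k y i l \<and> simC D bar alpha beta n k y l j"
      then obtain l where "simC D bar alpha beta n k y i l" "simC D bar alpha beta n k y l j" by blast
      then have "i \<in> N" "l \<in> N" "j \<in> N" "opp i l" "opp l j" unfolding simC_iff by auto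
      then show ?thesis using opp_opp by blast
    qed
  next
    assume j: "j \<in> N \<and> same i j"
    have "opp j l" using same_opp[OF same_sym l(2)] j by blast
    then have "opp l j" using opp_sym l(1) j by blast
    then have "simC D bar alpha beta n k y i l \<and> simC D bar alpha beta n k y l j"
      using simC_iff l assms j by blast
    then show "j \<in> cl i" using j unfolding cls_def approxC_def by blast
  qed
  then have "cl i = {j\<in>N. same i j}" by blast
  then show ?thesis using True by simp
next
  case False
  have "j \<in> cl i \<longleftrightarrow> j = i" for j
  proof
    assume "j \<in> cl i"
    then have "approxC D bar alpha beta n k y i j" unfolding cls_def by auto
    then have "i = j \<or> (\<exists>l. simC D bar alpha beta n k y i l \<and> simC D bar alpha beta n k y l j)"
      unfolding approxC_def by simp
    then show "j = i"
    proof
      assume "\<exists>l. simC D bar alpha beta n k y i l \<and> simC D bar alpha beta n k y l j"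
      then obtain l where "simC D bar alpha beta n k y i l" by blast
      then have "l \<in> N" "opp i l" unfolding simC_iff by auto
      then show ?thesis using False unfolding hasp_def by blast
    qed simp
  next
    assume "j = i" then show "j \<in> cl i" using assms unfolding cls_def approxC_def by simp
  qed
  then show ?thesis using False by auto
qed

lemma in_cls: "i \<in> N \<Longrightarrow> i \<in> cl i" unfolding cls_def approxC_def by simp

lemma cls_sub: "cl i \<subseteq> N" unfolding cls_def by auto

lemma cls_same: assumes "i \<in> N" "j \<in> N" "cl i = cl j" shows "same i j"
proof -
  have "j \<in> cl i" using in_cls[OF assms(2)] assms(3) by simp
  show ?thesis
  proof (cases "hasp i")
    case True then show ?thesis using \<open>j \<in> cl i\<close> cls_eq[OF assms(1)] by simp
  next
    case False then show ?thesis using \<open>j \<in> cl i\<close> cls_eq[OF assms(1)] same_refl by simp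
  qed
qed

lemma hasp_same: "same i j \<Longrightarrow> hasp i \<Longrightarrow> hasp j"
  unfolding hasp_def using same_opp same_sym by blast

lemma cls_same_eq: assumes "i \<in> N" "j \<in> N" "hasp i" "same i j" shows "cl i = cl j"
proof -
  have "hasp j" using hasp_same assms by blast
  have "{l\<in>N. same i l} = {l\<in>N. same j l}" using assms same_sym same_trans by blast
  then show ?thesis using cls_eq assms \<open>hasp j\<close> by simp
qed

abbreviation sb where "sb \<equiv> sigma_bar D bar alpha beta n k y"

definition L :: "nat \<Rightarrow> nat set \<times> bool" where "L i = (cl i, False)"

lemma sb_gen: assumes "\<not> snd x" "\<exists>i\<in>fst x. \<exists>j. simC D bar alpha beta n k y i j"
  shows "\<exists>i\<in>fst x. \<exists>j\<in>N. opp i j \<and> sb x = L j"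
proof -
  let ?j = "SOME j. \<exists>i\<in>fst x. simC D bar alpha beta n k y i j"
  have ex: "\<exists>j. \<exists>i\<in>fst x. simC D bar alpha beta n k y i j" using assms(2) by blast
  have "\<exists>i\<in>fst x. simC D bar alpha beta n k y i ?j" using someI_ex[OF ex] .
  moreover have "sb x = L ?j" unfolding sigma_bar_def L_def using assms by simp
  ultimately show ?thesis using simC_iff by blast
qed

lemma sb_L: assumes "i \<in> N" "j \<in> N" "opp i j" shows "sb (L i) = L j"
proof -
  have "\<exists>i'\<in>fst (L i). \<exists>j. simC D bar alpha beta n k y i' j"
    using assms in_cls simC_iff unfolding L_def by auto
  from sb_gen[OF _ this] obtain i' j' where ij: "i' \<in> cl i" "j' \<in> N" "opp i' j'" "sb (L i) = L j'"
    unfolding L_def by auto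
  have hi: "hasp i" using assms unfolding hasp_def by blast
  have i'N: "i' \<in> N" using ij cls_sub by blast
  have "same i i'" using ij(1) cls_eq[OF assms(1)] hi by simp
  then have "opp i j'" using same_opp ij by blast
  then have "opp j' i" using opp_sym assms ij by blast
  then have "same j' j" using opp_opp[of j' i j] assms ij by blast
  moreover have "hasp j'" unfolding hasp_def using \<open>opp j' i\<close> assms by blast
  ultimately have "cl j' = cl j" using cls_same_eq ij assms by blast
  then show ?thesis using ij unfolding L_def by simp
qed

lemma sb_L_no: assumes "i \<in> N" "\<not> hasp i" shows "sb (L i) = (cl i, True)"
proof -
  have "\<not> (\<exists>i'\<in>cl i. \<exists>j. simC D bar alpha beta n k y i' j)"
    using assms cls_eq[OF assms(1)] simC_iff unfolding hasp_def by auto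
  then show ?thesis unfolding sigma_bar_def L_def by simp
qed

definition good where "good x \<longleftrightarrow> sb (sb x) = x"

lemma good_L: assumes "i \<in> N" shows "good (L i)"
proof (cases "hasp i")
  case True
  then obtain j where j: "j \<in> N" "opp i j" unfolding hasp_def by blast
  then have "sb (L i) = L j" using sb_L assms by blast
  moreover have "sb (L j) = L i" using sb_L opp_sym j assms by blast
  ultimately show ?thesis unfolding good_def by simp
next
  case False
  then show ?thesis using sb_L_no[OF assms False] unfolding good_def sigma_bar_def L_def by simp
qed

lemma good_sb: "good x \<Longrightarrow> good (sb x)" unfolding good_def by simp

lemma good_sbsb: "good (sb (sb x))"
proof (cases "snd x")
  case True
  then have x: "sb x = (fst x, False)" unfolding sigma_bar_def by simp
  show ?thesis
  proof (cases "\<exists>i\<in>fst x. \<exists>j. simC D bar alpha beta n k y i j")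
    case True
    from sb_gen[of "(fst x, False)"] True obtain j where "j \<in> N" "sb (fst x, False) = L j" by auto
    then show ?thesis using x good_L by simp
  next
    case False
    then have "sb (fst x, False) = (fst x, True)" unfolding sigma_bar_def by simp
    then show ?thesis using x \<open>snd x\<close> unfolding good_def by (cases x) simp
  qed
next
  case False
  show ?thesis
  proof (cases "\<exists>i\<in>fst x. \<exists>j. simC D bar alpha beta n k y i j")
    case True
    from sb_gen[of x] True False obtain j where "j \<in> N" "sb x = L j" by auto
    then show ?thesis using good_L good_sb by simp
  next
    case c: False
    then have "sb x = (fst x, True)" unfolding sigma_bar_def using False by simp
    then have "sb (sb x) = x" using False unfolding sigma_bar_def by (cases x) simp
    then show ?thesis unfolding good_def by simp
  qed
qed

end



definition pushl :: "('a \<Rightarrow> 'a) \<Rightarrow> 'a list \<Rightarrow> 'a \<Rightarrow> 'a list" where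
  "pushl s st x = (case st of [] \<Rightarrow> [x] | z # zs \<Rightarrow> if x = s z then zs else x # st)"

definition redl :: "('a \<Rightarrow> 'a) \<Rightarrow> 'a list \<Rightarrow> 'a list" where
  "redl s w = foldl (pushl s) [] w"

fun okst :: "('a \<Rightarrow> 'a) \<Rightarrow> 'a list \<Rightarrow> bool" where
  "okst s (z # z' # zs) = (z \<noteq> s z' \<and> okst s (z' # zs))"
| "okst s _ = True"

lemma okst_tl: "okst s (z # zs) \<Longrightarrow> okst s zs"
  by (cases zs) auto

lemma okst_push: "okst s st \<Longrightarrow> okst s (pushl s st x)"
  unfolding pushl_def by (cases st) (auto dest: okst_tl)

lemma okst_foldl: "okst s st \<Longrightarrow> okst s (foldl (pushl s) st w)"
  by (induction w arbitrary: st) (auto intro: okst_push)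

lemma set_push: "set (pushl s st x) \<subseteq> insert x (set st)"
  unfolding pushl_def by (cases st) auto

lemma set_foldl: "set (foldl (pushl s) st w) \<subseteq> set st \<union> set w"
proof (induction w arbitrary: st)
  case Nil then show ?case by simp
next
  case (Cons a w)
  have "set (foldl (pushl s) (pushl s st a) w) \<subseteq> set (pushl s st a) \<union> set w" using Cons .
  then show ?case using set_push[of s st a] by auto
qed

lemma push_cancel:
  assumes "okst s st" "\<forall>c\<in>set st. s (s c) = c"
  shows "pushl s (pushl s st x) (s x) = st"
proof (cases st)
  case Nil then show ?thesis unfolding pushl_def by simp
next
  case (Cons z zs)
  show ?thesis
  proof (cases "x = s z")
    case True
    have gz: "s (s z) = z" using assms Cons by simp
    show ?thesis
    proof (cases zs)
      case Nil then show ?thesis using Cons True gz unfolding pushl_def by simp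
    next
      case (Cons z' zs')
      have "z \<noteq> s z'" using assms(1) \<open>st = z # zs\<close> Cons by simp
      then have "s x \<noteq> s z'" using True gz by simp
      then show ?thesis using \<open>st = z # zs\<close> Cons True gz unfolding pushl_def by simp
    qed
  next
    case False then show ?thesis using Cons unfolding pushl_def by simp
  qed
qed

lemma redl_step:
  assumes "\<forall>c\<in>set u. s (s c) = c"
  shows "redl s (u @ [x, s x] @ v) = redl s (u @ v)"
proof -
  let ?st = "foldl (pushl s) [] u"
  have ok: "okst s ?st" by (rule okst_foldl) simp
  have g: "\<forall>c\<in>set ?st. s (s c) = c" using set_foldl[of s "[]" u] assms by auto
  show ?thesis unfolding redl_def using push_cancel[OF ok g, of x] by simp
qed

lemma redl_free_eq:
  assumes comm: "\<And>x. s (f x) = f (s x)" and gd: "\<And>x. s (s (f x)) = f x"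
    and eq: "free_eq s w1 w2"
  shows "redl s (map f w1) = redl s (map f w2)"
proof -
  have stp: "redl s (map f a) = redl s (map f b)" if "(a, b) \<in> free_step s" for a b
  proof -
    have "\<exists>u x v. a = u @ [x, s x] @ v \<and> b = u @ v"
      using that unfolding free_step_def by simp
    then obtain u x v where ab: "a = u @ [x, s x] @ v" "b = u @ v" by blast
    have "map f a = map f u @ [f x, s (f x)] @ map f v" using ab comm by simp
    moreover have "\<forall>c\<in>set (map f u). s (s c) = c" using gd by auto
    ultimately have "redl s (map f a) = redl s (map f u @ map f v)"
      using redl_step[of "map f u" s "f x" "map f v"] by simp
    then show ?thesis using ab by simp
  qed
  have "(w1, w2) \<in> (free_step s \<union> (free_step s)\<inverse>)\<^sup>*" using eq unfolding free_eq_def .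
  then show ?thesis
  proof (induction rule: rtrancl_induct)
    case base then show ?case by simp
  next
    case (step b c)
    have "redl s (map f b) = redl s (map f c)"
      using step(2) stp by auto
    then show ?case using step(3) by simp
  qed
qed

lemma freely_reduced_prefix: "freely_reduced s (w @ [x]) \<Longrightarrow> freely_reduced s w"
  unfolding freely_reduced_def by (metis append.assoc)

lemma redl_reduced: "freely_reduced s w \<Longrightarrow> redl s w = rev w"
proof (induction w rule: rev_induct)
  case Nil then show ?case by (simp add: redl_def)
next
  case (snoc x w)
  have fr: "freely_reduced s (w @ [x])" using snoc.prems .
  have "freely_reduced s w" using freely_reduced_prefix[OF fr] .
  then have IH: "redl s w = rev w" using snoc.IH by blast
  show ?case
  proof (cases w rule: rev_cases)
    case Nil then show ?thesis by (simp add: redl_def pushl_def)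
  next
    case sn: (snoc w' z)
    have "x \<noteq> s z"
    proof
      assume "x = s z"
      then have "w @ [x] = w' @ [z, s z] @ []" using sn by simp
      then show False using fr unfolding freely_reduced_def by blast
    qed
    then show ?thesis using IH sn unfolding redl_def by (simp add: pushl_def)
  qed
qed

definition pushp :: "('b \<Rightarrow> 'a) \<Rightarrow> ('a \<Rightarrow> 'a) \<Rightarrow> 'b list \<Rightarrow> 'b \<Rightarrow> 'b list" where
  "pushp L s st i = (case st of [] \<Rightarrow> [i] | j # js \<Rightarrow> if L i = s (L j) then js else i # st)"

lemma map_pushp: "map L (pushp L s st i) = pushl s (map L st) (L i)"
  unfolding pushp_def pushl_def by (cases st) auto

lemma map_foldl_pushp:
  "map L (foldl (pushp L s) st w) = foldl (pushl s) (map L st) (map L w)"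
  by (induction w arbitrary: st) (auto simp: map_pushp)



context gbs_setting begin

abbreviation FG where "FG \<equiv> FG_eq E iota tau bar alpha beta"
abbreviation RS where "RS \<equiv> pres_step E iota tau bar alpha beta"

lemma fg_refl: "FG uu uu" unfolding FG_eq_def by simp

lemma fg_sym: "FG uu v \<Longrightarrow> FG v uu"
proof -
  assume a: "FG uu v"
  have "sym (RS \<union> RS\<inverse>)" by (auto simp: sym_def)
  then have "sym ((RS \<union> RS\<inverse>)\<^sup>*)" by (rule sym_rtrancl)
  then show ?thesis using a unfolding FG_eq_def by (blast dest: symD)
qed

lemma fg_trans: "FG uu v \<Longrightarrow> FG v w \<Longrightarrow> FG uu w"
  unfolding FG_eq_def by simp

lemma rs_del: "(uu @ [x, inv_letter x] @ v, uu @ v) \<in> RS"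
  unfolding pres_step_def
  by (rule UnI1, rule CollectI, rule exI[of _ uu], rule exI[of _ x], rule exI[of _ v]) simp

lemma rs_rel: "rr \<in> relators E iota tau bar alpha beta \<Longrightarrow> (uu @ rr @ v, uu @ v) \<in> RS"
  unfolding pres_step_def
  by (rule UnI2, rule CollectI, rule exI[of _ uu], rule exI[of _ rr], rule exI[of _ v]) simp

lemma rs_ctx: assumes "(a, b) \<in> RS" shows "(c @ a @ d, c @ b @ d) \<in> RS"
proof -
  from assms have "(a, b) \<in> {(uu @ [x, inv_letter x] @ v, uu @ v) | uu x v. True} \<or>
     (a, b) \<in> {(uu @ rr @ v, uu @ v) | uu rr v. rr \<in> relators E iota tau bar alpha beta}"
    unfolding pres_step_def by (rule UnE) simp_all
  then show ?thesis
  proof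
    assume "(a, b) \<in> {(uu @ [x, inv_letter x] @ v, uu @ v) | uu x v. True}"
    then obtain uu x v where ab: "a = uu @ [x, inv_letter x] @ v" "b = uu @ v" by blast
    have "((c @ uu) @ [x, inv_letter x] @ (v @ d), (c @ uu) @ (v @ d)) \<in> RS" by (rule rs_del)
    then show ?thesis using ab by simp
  next
    assume "(a, b) \<in> {(uu @ rr @ v, uu @ v) | uu rr v. rr \<in> relators E iota tau bar alpha beta}"
    then obtain uu rr v where ab: "a = uu @ rr @ v" "b = uu @ v" "rr \<in> relators E iota tau bar alpha beta" by blast
    have "((c @ uu) @ rr @ (v @ d), (c @ uu) @ (v @ d)) \<in> RS" by (rule rs_rel[OF ab(3)])
    then show ?thesis using ab by simp
  qed
qed

lemma fg_ctx: assumes "FG a b" shows "FG (c @ a @ d) (c @ b @ d)"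
proof -
  have "(a, b) \<in> (RS \<union> RS\<inverse>)\<^sup>*" using assms unfolding FG_eq_def .
  then show ?thesis
  proof (induction rule: rtrancl_induct)
    case base then show ?case by (rule fg_refl)
  next
    case (step b' c')
    have "(c @ b' @ d, c @ c' @ d) \<in> RS \<union> RS\<inverse>" using step(2) rs_ctx by blast
    then have "FG (c @ b' @ d) (c @ c' @ d)" unfolding FG_eq_def by blast
    then show ?case using step(3) fg_trans by blast
  qed
qed

lemma fg_app: assumes "FG a a'" "FG b b'" shows "FG (a @ b) (a' @ b')"
proof -
  have 1: "FG (a @ b) (a' @ b)" using fg_ctx[OF assms(1), of "[]" b] by simp
  have 2: "FG (a' @ b) (a' @ b')" using fg_ctx[OF assms(2), of a' "[]"] by simp
  show ?thesis using fg_trans[OF 1 2] .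
qed

lemma fg_del: "FG (uu @ [x, inv_letter x] @ v) (uu @ v)"
  unfolding FG_eq_def using rs_del by blast

lemma fg_rel: "rr \<in> relators E iota tau bar alpha beta \<Longrightarrow> FG (uu @ rr @ v) (uu @ v)"
  unfolding FG_eq_def using rs_rel by blast

lemma fg_rel0: "rr \<in> relators E iota tau bar alpha beta \<Longrightarrow> FG rr []"
  using fg_rel[of rr "[]" "[]"] by simp

lemma inv_inv: "inv_letter (inv_letter x) = x" unfolding inv_letter_def by simp

lemma rep_cancel:
  "FG (replicate p x @ replicate q (inv_letter x))
      (replicate (p - q) x @ replicate (q - p) (inv_letter x))"
proof (induction p arbitrary: q)
  case 0 then show ?case by (simp add: fg_refl)
next
  case (Suc p)
  show ?case
  proof (cases q)
    case 0 then show ?thesis by (simp add: fg_refl)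
  next
    case (Suc q')
    have "replicate (Suc p) x @ replicate q (inv_letter x) =
          replicate p x @ [x, inv_letter x] @ replicate q' (inv_letter x)"
    proof -
      have "replicate (Suc p) x = replicate p x @ [x]" by (simp add: replicate_append_same)
      then show ?thesis using Suc by simp
    qed
    then have A: "FG (replicate (Suc p) x @ replicate q (inv_letter x)) (replicate p x @ replicate q' (inv_letter x))"
      using fg_del[of "replicate p x" x "replicate q' (inv_letter x)"] by (simp only:)
    have B: "FG (replicate p x @ replicate q' (inv_letter x)) (replicate (p - q') x @ replicate (q' - p) (inv_letter x))"
      by (rule Suc.IH)
    have "Suc p - q = p - q'" "q - Suc p = q' - p" using Suc by simp_all
    then show ?thesis using fg_trans[OF A B] by (simp only:)
  qed
qed

lemma powl_0 [simp]: "powl a 0 = []" unfolding powl_def by simp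

lemma powl_add: "FG (powl a kk @ powl a m) (powl a (kk + m))"
proof -
  let ?c = "(GV a, True) :: ('v, 'e) letter"
  let ?d = "(GV a, False) :: ('v, 'e) letter"
  have icd: "inv_letter ?c = ?d" "inv_letter ?d = ?c" unfolding inv_letter_def by simp_all
  have pp: "kk \<ge> 0 \<Longrightarrow> powl a kk = replicate (nat kk) ?c" for kk unfolding powl_def by (cases "kk = 0") auto
  have nn: "kk \<le> 0 \<Longrightarrow> powl a kk = replicate (nat (-kk)) ?d" for kk unfolding powl_def by (cases "kk = 0") auto
  consider "kk \<ge> 0" "m \<ge> 0" | "kk \<le> 0" "m \<le> 0" | "kk > 0" "m < 0" | "kk < 0" "m > 0" by linarith
  then show ?thesis
  proof cases
    case 1
    have "powl a kk @ powl a m = replicate (nat kk) ?c @ replicate (nat m) ?c" using 1 pp by simp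
    also have "\<dots> = replicate (nat kk + nat m) ?c" by (rule replicate_add[symmetric])
    also have "\<dots> = powl a (kk + m)" using 1 pp[of "kk+m"] by (simp add: nat_add_distrib)
    finally have "powl a kk @ powl a m = (powl a (kk + m) :: ('v, 'e) letter list)" .
    then show ?thesis using fg_refl by simp
  next
    case 2
    have "powl a kk @ powl a m = replicate (nat (-kk)) ?d @ replicate (nat (-m)) ?d" using 2 nn by simp
    also have "\<dots> = replicate (nat (-kk) + nat (-m)) ?d" by (rule replicate_add[symmetric])
    also have "\<dots> = powl a (kk + m)" using 2 nn[of "kk+m"] by (simp add: nat_add_distrib)
    finally have "powl a kk @ powl a m = (powl a (kk + m) :: ('v, 'e) letter list)" .
    then show ?thesis using fg_refl by simp
  next
    case 3
    have "FG (replicate (nat kk) ?c @ replicate (nat (-m)) ?d)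
            (replicate (nat kk - nat (-m)) ?c @ replicate (nat (-m) - nat kk) ?d)"
      using rep_cancel[of "nat kk" ?c "nat (-m)"] icd by simp
    moreover have "replicate (nat kk - nat (-m)) ?c @ replicate (nat (-m) - nat kk) ?d = powl a (kk + m)"
      using 3 pp[of "kk+m"] nn[of "kk+m"] by (cases "kk + m \<ge> 0") (simp_all add: nat_diff_distrib)
    ultimately show ?thesis using 3 pp[of kk] nn[of m] by simp
  next
    case 4
    have "FG (replicate (nat (-kk)) ?d @ replicate (nat m) ?c)
            (replicate (nat (-kk) - nat m) ?d @ replicate (nat m - nat (-kk)) ?c)"
      using rep_cancel[of "nat (-kk)" ?d "nat m"] icd by simp
    moreover have "replicate (nat (-kk) - nat m) ?d @ replicate (nat m - nat (-kk)) ?c = powl a (kk + m)"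
      using 4 pp[of "kk+m"] nn[of "kk+m"] by (cases "kk + m \<ge> 0") (simp_all add: nat_diff_distrib)
    ultimately show ?thesis using 4 nn[of kk] pp[of m] by simp
  qed
qed

abbreviation ge where "ge e \<equiv> ((GE e, True) :: ('v, 'e) letter)"

lemma rel_bar: "e \<in> E \<Longrightarrow> FG [ge (bar e), ge e] []"
  by (rule fg_rel0) (auto simp: relators_def)

lemma rel_bar2: "e \<in> E \<Longrightarrow> FG [ge e, ge (bar e)] []"
  using rel_bar[of "bar e"] eE(1,3) by simp

lemma rel_main: "e \<in> E \<Longrightarrow> FG ([ge e] @ powl (tau e) (beta e) @ [ge (bar e)] @ powl (iota e) (- alpha e)) []"
  by (rule fg_rel0) (auto simp: relators_def)

lemma fg_sub: "FG x x' \<Longrightarrow> FG (c @ x' @ d) z \<Longrightarrow> FG (c @ x @ d) z"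
  using fg_ctx fg_trans by blast

lemma fg_rw: "FG x z \<Longrightarrow> FG a b \<Longrightarrow> z = c @ a @ d \<Longrightarrow> z' = c @ b @ d \<Longrightarrow> FG x z'"
  using fg_ctx fg_trans by blast

lemma powl_cancel: "FG (powl a (- t) @ powl a t) []"
  using powl_add[of a "-t" t] by simp

lemma powl_cancel': "FG (powl a t @ powl a (- t)) []"
  using powl_add[of a t "-t"] by simp

lemma pinch_base:
  assumes e: "e \<in> E"
  shows "FG ([ge e] @ powl (tau e) (beta e) @ [ge (bar e)]) (powl (iota e) (alpha e))"
proof -
  let ?X = "[ge e] @ powl (tau e) (beta e) @ [ge (bar e)]"
  have 1: "FG ?X (?X @ powl (iota e) (- alpha e) @ powl (iota e) (alpha e))"
    using fg_rw[OF fg_refl fg_sym[OF powl_cancel[of "iota e" "alpha e"]], where c = ?X and d = "[]"] by simp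
  show ?thesis
    using fg_rw[OF 1 rel_main[OF e], where c = "[]" and d = "powl (iota e) (alpha e)"] by simp
qed

lemma pinch_base':
  assumes e: "e \<in> E"
  shows "FG ([ge e] @ powl (tau e) (- beta e) @ [ge (bar e)]) (powl (iota e) (- alpha e))"
proof -
  let ?a = "iota e" and ?b = "tau e"
  let ?X = "[ge e] @ powl ?b (- beta e) @ [ge (bar e)]"
  have 1: "FG ?X (?X @ powl ?a (alpha e) @ powl ?a (- alpha e))"
    using fg_rw[OF fg_refl fg_sym[OF powl_cancel'[of ?a "alpha e"]], where c = ?X and d = "[]"] by simp
  have 2: "FG ?X (?X @ ([ge e] @ powl ?b (beta e) @ [ge (bar e)]) @ powl ?a (- alpha e))"
    using fg_rw[OF 1 fg_sym[OF pinch_base[OF e]], where c = ?X and d = "powl ?a (- alpha e)"] by simp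
  have 3: "FG ?X ([ge e] @ powl ?b (- beta e) @ powl ?b (beta e) @ [ge (bar e)] @ powl ?a (- alpha e))"
    using fg_rw[OF 2 rel_bar[OF e], where c = "[ge e] @ powl ?b (- beta e)" and d = "powl ?b (beta e) @ [ge (bar e)] @ powl ?a (- alpha e)"]
    by simp
  have 4: "FG ?X ([ge e] @ [ge (bar e)] @ powl ?a (- alpha e))"
    using fg_rw[OF 3 powl_cancel, where c = "[ge e]" and d = "[ge (bar e)] @ powl ?a (- alpha e)"]
    by simp
  show ?thesis
    using fg_rw[OF 4 rel_bar2[OF e], where c = "[]" and d = "powl ?a (- alpha e)"] by simp
qed

lemma pinch_nat:
  assumes e: "e \<in> E" and base: "FG ([ge e] @ powl (tau e) s @ [ge (bar e)]) (powl (iota e) t)"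
  shows "FG ([ge e] @ powl (tau e) (s * int j) @ [ge (bar e)]) (powl (iota e) (t * int j))"
proof (induction j)
  case 0 then show ?case using rel_bar2[OF e] by simp
next
  case (Suc j)
  let ?a = "iota e" and ?b = "tau e"
  let ?X = "[ge e] @ powl ?b (s * int (Suc j)) @ [ge (bar e)]"
  have 1: "FG ?X ([ge e] @ (powl ?b (s * int j) @ powl ?b s) @ [ge (bar e)])"
    using fg_rw[OF fg_refl fg_sym[OF powl_add[of ?b "s * int j" s]], where c = "[ge e]" and d = "[ge (bar e)]"]
    by (simp add: algebra_simps)
  have 2: "FG ?X (([ge e] @ powl ?b (s * int j)) @ [ge (bar e), ge e] @ (powl ?b s @ [ge (bar e)]))"
    using fg_rw[OF 1 fg_sym[OF rel_bar[OF e]], where c = "[ge e] @ powl ?b (s * int j)" and d = "powl ?b s @ [ge (bar e)]"]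
    by simp
  have 3: "FG ?X (powl ?a (t * int j) @ ([ge e] @ powl ?b s @ [ge (bar e)]))"
    using fg_rw[OF 2 Suc.IH, where c = "[]" and d = "[ge e] @ powl ?b s @ [ge (bar e)]"]
    by simp
  have 4: "FG ?X (powl ?a (t * int j) @ powl ?a t)"
    using fg_rw[OF 3 base, where c = "powl ?a (t * int j)" and d = "[]"]
    by simp
  have 5: "FG ?X (powl ?a (t * int j + t))"
    using fg_rw[OF 4 powl_add[of ?a "t * int j" t], where c = "[]" and d = "[]"]
    by simp
  then show ?case by (simp add: algebra_simps)
qed

lemma pinch:
  assumes e: "e \<in> E"
  shows "FG ([ge e] @ powl (tau e) (beta e * m) @ [ge (bar e)]) (powl (iota e) (alpha e * m))"
proof (cases "m \<ge> 0")
  case True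
  define j where "j = nat m"
  have "m = int j" using True unfolding j_def by simp
  then show ?thesis using pinch_nat[OF e pinch_base[OF e], of j] by simp
next
  case False
  define j where "j = nat (- m)"
  have j: "m = - int j" using False unfolding j_def by simp
  have "beta e * m = (- beta e) * int j" "alpha e * m = (- alpha e) * int j" using j by simp_all
  then show ?thesis using pinch_nat[OF e pinch_base'[OF e], of j] by simp
qed

lemma conj:
  assumes e: "e \<in> E"
  shows "FG (powl (iota e) (alpha e * m) @ [ge e] @ powl (tau e) (- (beta e * m))) [ge e]"
proof -
  let ?a = "iota e" and ?b = "tau e"
  let ?X = "powl ?a (alpha e * m) @ [ge e] @ powl ?b (- (beta e * m))"
  have 1: "FG ?X (([ge e] @ powl ?b (beta e * m) @ [ge (bar e)]) @ [ge e] @ powl ?b (- (beta e * m)))"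
    using fg_rw[OF fg_refl fg_sym[OF pinch[OF e, of m]], where c = "[]" and d = "[ge e] @ powl ?b (- (beta e * m))"]
    by simp
  have 2: "FG ?X ([ge e] @ powl ?b (beta e * m) @ powl ?b (- (beta e * m)))"
    using fg_rw[OF 1 rel_bar[OF e], where c = "[ge e] @ powl ?b (beta e * m)" and d = "powl ?b (- (beta e * m))"]
    by simp
  show ?thesis
    using fg_rw[OF 2 powl_cancel', where c = "[ge e]" and d = "[]"] by simp
qed

end


context gbs_setting begin

lemma letters_append [simp]: "letters (xs @ ys) = letters xs @ letters ys"
  unfolding letters_def by simp
lemma letters_Cons_SE [simp]: "letters (SE e # xs) = ge e # letters xs"
  unfolding letters_def by simp
lemma letters_pw [simp]: "letters (pw a t) = powl a t"
  unfolding letters_def pw_def by simp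
lemma letters_Nil [simp]: "letters [] = []" unfolding letters_def by simp

lemma fact_word_snoc:
  "fact_word tau a K0 (ps @ [(e, m)]) = fact_word tau a K0 ps @ SE e # pw (tau e) m"
  unfolding fact_word_def by simp

definition W :: "nat \<Rightarrow> ('v, 'e) letter list" where
  "W p = letters (fact_word tau a0 (k 0) (map (\<lambda>i. (y i, k i)) [1..<p+1]))"

lemma W_Suc: "W (Suc p) = W p @ [ge (y (Suc p))] @ powl (tau (y (Suc p))) (k (Suc p))"
proof -
  have "[1..<Suc p + 1] = [1..<p+1] @ [Suc p]" by simp
  then show ?thesis unfolding W_def by (simp add: fact_word_snoc del: upt_Suc)
qed

definition fw :: "(nat \<Rightarrow> int) \<Rightarrow> nat list \<Rightarrow> ('v, 'e) syl list" where
  "fw e qs = fact_word tau a0 (e 0) (map (\<lambda>l. (y (qs ! l), e (Suc l))) [0..<length qs])"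

lemma pw_0 [simp]: "pw a 0 = []" unfolding pw_def by simp

lemma fw_snoc: "fw e (qs @ [q]) = fw e qs @ SE (y q) # pw (tau (y q)) (e (Suc (length qs)))"
proof -
  have "map (\<lambda>l. (y ((qs @ [q]) ! l), e (Suc l))) [0..<length qs] =
        map (\<lambda>l. (y (qs ! l), e (Suc l))) [0..<length qs]"
    by (rule map_cong) (auto simp: nth_append)
  then have M: "map (\<lambda>l. (y ((qs @ [q]) ! l), e (Suc l))) [0..<length (qs @ [q])] =
        map (\<lambda>l. (y (qs ! l), e (Suc l))) [0..<length qs] @ [(y q, e (Suc (length qs)))]"
    by simp
  show ?thesis unfolding fw_def M fact_word_snoc by (rule refl)
qed

lemma fw_cong: "(\<And>l. l \<le> length qs \<Longrightarrow> e l = e' l) \<Longrightarrow> fw e qs = fw e' qs"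
  unfolding fw_def by (auto intro!: arg_cong2[where f = "fact_word tau a0"])

lemma fw_ycong: "length qs = length qs' \<Longrightarrow> (\<And>l. l < length qs \<Longrightarrow> y (qs ! l) = y (qs' ! l)) \<Longrightarrow> fw e qs = fw e qs'"
  unfolding fw_def by (auto intro!: arg_cong2[where f = "fact_word tau a0"])

lemma fw_Nil: "fw e [] = pw a0 (e 0)" unfolding fw_def fact_word_def by simp

lemma fw_last:
  assumes "0 \<notin> set qs"
  shows "letters (fw e qs) = letters (fw (e(length qs := 0)) qs) @ powl (vtx (hat_start qs (length qs))) (e (length qs))"
proof (cases qs rule: rev_cases)
  case Nil then show ?thesis by (simp add: fw_Nil hat_start_def vtx_def)
next
  case (snoc qs' q)
  have q: "q \<noteq> 0" using assms snoc by auto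
  have "fw e qs' = fw (e(length qs := 0)) qs'" by (rule fw_cong) (simp add: snoc)
  moreover have "hat_start qs (length qs) = q" using snoc by (simp add: hat_start_def)
  ultimately show ?thesis using snoc q by (simp add: fw_snoc vtx_def)
qed

definition Kf :: "nat list \<Rightarrow> nat \<Rightarrow> nat \<Rightarrow> int" where
  "Kf qs p l = \<lfloor>K (hat_start qs l) (hat_end p qs l)\<rfloor>"

definition hw :: "nat list \<Rightarrow> nat \<Rightarrow> ('v, 'e) syl list" where "hw qs p = fw (Kf qs p) qs"

lemma hs_snoc: "l \<le> length qs \<Longrightarrow> hat_start (qs @ [q]) l = hat_start qs l"
  unfolding hat_start_def by (cases l) (auto simp: nth_append)
lemma hs_snoc_last: "hat_start (qs @ [q]) (Suc (length qs)) = q"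
  unfolding hat_start_def by simp
lemma he_snoc: "l \<le> length qs \<Longrightarrow> hat_end p (qs @ [q]) l = hat_end (q - 1) qs l"
  unfolding hat_end_def by (auto simp: nth_append)
lemma he_snoc_last: "hat_end p (qs @ [q]) (Suc (length qs)) = p"
  unfolding hat_end_def by simp
lemma he_lt: "l < length qs \<Longrightarrow> hat_end p qs l = hat_end p' qs l"
  unfolding hat_end_def by simp

lemma F_Suc: "F (Suc j) = F j + of_int (k j) * Pi 0 j" unfolding F_def by simp

lemma K_self: "K i i = of_int (k i)" unfolding K_Pi by (simp add: Pi_self)

lemma of_int_floor_Ints: "x \<in> \<int> \<Longrightarrow> of_int \<lfloor>x\<rfloor> = (x :: rat)"
  by (auto elim: Ints_cases)

definition inv :: "nat \<Rightarrow> nat list \<Rightarrow> bool" where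
  "inv p qs \<longleftrightarrow> sorted_wrt (<) qs \<and> set qs \<subseteq> {1..p} \<and>
     (\<forall>l \<le> length qs. K (hat_start qs l) (hat_end p qs l) \<in> \<int>) \<and>
     (\<forall>l < length qs. vtx (qs ! l - 1) = vtx (hat_start qs l) \<and> P (qs ! l - 1) = P (hat_start qs l)) \<and>
     vtx p = vtx (hat_start qs (length qs)) \<and> P p = P (hat_start qs (length qs)) \<and>
     FG (W p) (letters (hw qs p))"

lemma inv_0: "inv 0 []"
proof -
  have "K 0 0 = of_int (k 0)" by (rule K_self)
  then show ?thesis unfolding inv_def hw_def fw_def Kf_def W_def hat_start_def hat_end_def
    by (simp add: fg_refl fact_word_def)
qed

lemma inv_push:
  assumes I: "inv p qs" and pn: "p < n"
  shows "inv (Suc p) (qs @ [Suc p])"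
proof -
  let ?q = "Suc p" and ?m = "length qs"
  let ?qs = "qs @ [Suc p]"
  have s: "sorted_wrt (<) qs" and st: "set qs \<subseteq> {1..p}"
    and ki: "\<forall>l \<le> ?m. K (hat_start qs l) (hat_end p qs l) \<in> \<int>"
    and cl: "\<forall>l < ?m. vtx (qs ! l - 1) = vtx (hat_start qs l) \<and> P (qs ! l - 1) = P (hat_start qs l)"
    and lv: "vtx p = vtx (hat_start qs ?m)" and lp: "P p = P (hat_start qs ?m)"
    and fg: "FG (W p) (letters (hw qs p))" using I unfolding inv_def by blast+
  have s': "sorted_wrt (<) ?qs" using s st by (auto simp: sorted_wrt_append)
  have st': "set ?qs \<subseteq> {1..Suc p}" using st by auto
  have ki': "\<forall>l \<le> length ?qs. K (hat_start ?qs l) (hat_end (Suc p) ?qs l) \<in> \<int>"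
  proof (intro allI impI)
    fix l assume "l \<le> length ?qs"
    then have "l \<le> Suc ?m" by simp
    then consider "l \<le> ?m" | "l = Suc ?m" by linarith
    then show "K (hat_start ?qs l) (hat_end (Suc p) ?qs l) \<in> \<int>"
    proof cases
      case 1 then show ?thesis using ki hs_snoc he_snoc by simp
    next
      case 2 then show ?thesis using hs_snoc_last he_snoc_last K_self by simp
    qed
  qed
  have cl': "\<forall>l < length ?qs. vtx (?qs ! l - 1) = vtx (hat_start ?qs l) \<and> P (?qs ! l - 1) = P (hat_start ?qs l)"
  proof (intro allI impI)
    fix l assume "l < length ?qs"
    then have "l < Suc ?m" by simp
    then consider "l < ?m" | "l = ?m" by linarith
    then show "vtx (?qs ! l - 1) = vtx (hat_start ?qs l) \<and> P (?qs ! l - 1) = P (hat_start ?qs l)"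
    proof cases
      case 1 then show ?thesis using cl hs_snoc[of l qs] by (simp add: nth_append)
    next
      case 2 then show ?thesis using lv lp hs_snoc[of l qs] by simp
    qed
  qed
  have lv': "vtx (Suc p) = vtx (hat_start ?qs (length ?qs))" using hs_snoc_last by simp
  have lp': "P (Suc p) = P (hat_start ?qs (length ?qs))" using hs_snoc_last by simp
  have "fw (Kf ?qs (Suc p)) qs = fw (Kf qs p) qs"
    by (rule fw_cong) (simp add: Kf_def hs_snoc he_snoc)
  moreover have "Kf ?qs (Suc p) (Suc ?m) = k (Suc p)"
    unfolding Kf_def using hs_snoc_last he_snoc_last K_self by simp
  ultimately have "letters (hw ?qs (Suc p)) = letters (hw qs p) @ [ge (y (Suc p))] @ powl (tau (y (Suc p))) (k (Suc p))"
    unfolding hw_def by (simp add: fw_snoc)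
  then have fg': "FG (W (Suc p)) (letters (hw ?qs (Suc p)))"
    unfolding W_Suc using fg_app[OF fg fg_refl] by simp
  show ?thesis unfolding inv_def using s' st' ki' cl' lv' lp' fg' by blast
qed

lemma ratid:
  assumes hq: "h \<le> q - 1" and q1: "1 \<le> q" and qp: "q \<le> p" and pn: "Suc p \<le> n"
    and Ph: "P h = P (q - 1)" and Pq: "P q = P p" and yb: "y (Suc p) = bar (y q)"
    and Km: "K q p = of_int (beta (y q) * m)"
  shows "K h (Suc p) = K h (q - 1) + of_int (alpha (y q) * m) + of_int (k (Suc p))"
proof -
  have yq: "y q \<in> E" using yE q1 qp pn by simp
  have 1: "K h (Suc p) * Pi 0 h = F (Suc (Suc p)) - F h" using K_F[of h "Suc p"] hq qp by simp
  have 2: "K h (q - 1) * Pi 0 h = F q - F h" using K_F[of h "q - 1"] hq q1 by simp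
  have 3: "K q p * Pi 0 q = F (Suc p) - F q" using K_F[of q p] qp by simp
  have Pq1: "Pi 0 (q - 1) = Pi 0 h" using Pi0_eq[of h "q - 1"] Ph qp pn hq by simp
  have 4: "Pi 0 q = Pi 0 h * r (y q)" using Pi_Suc[of 0 "q - 1"] q1 Pq1 by simp
  have "Pi 0 (Suc p) = Pi 0 p * r (y (Suc p))" using Pi_Suc[of 0 p] by simp
  also have "Pi 0 p = Pi 0 q" using Pi0_eq[of q p] Pq qp pn by simp
  finally have 5: "Pi 0 (Suc p) = Pi 0 h" using 4 r_bar[OF yq] yb by (simp add: algebra_simps)
  have rb: "r (y q) * of_int (beta (y q)) = of_int (alpha (y q))" using r_beta[OF yq] .
  have "K h (Suc p) * Pi 0 h = K h (q - 1) * Pi 0 h + K q p * Pi 0 q + of_int (k (Suc p)) * Pi 0 (Suc p)"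
    using 1 2 3 F_Suc[of "Suc p"] by simp
  also have "\<dots> = (K h (q - 1) + of_int (alpha (y q) * m) + of_int (k (Suc p))) * Pi 0 h"
    using Km 4 5 rb by (simp add: algebra_simps)
  finally show ?thesis using Pi_nz[of h 0] hq qp pn by simp
qed

lemma inv_pop:
  assumes I: "inv p (qs @ [q])" and pn: "p < n" and op: "opp q (Suc p)"
  shows "inv (Suc p) qs"
proof -
  let ?m = "length qs" and ?qs = "qs @ [q]"
  let ?h = "hat_start qs ?m"
  have s: "sorted_wrt (<) ?qs" and st: "set ?qs \<subseteq> {1..p}"
    and ki: "\<forall>l \<le> length ?qs. K (hat_start ?qs l) (hat_end p ?qs l) \<in> \<int>"
    and cl: "\<forall>l < length ?qs. vtx (?qs ! l - 1) = vtx (hat_start ?qs l) \<and> P (?qs ! l - 1) = P (hat_start ?qs l)"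
    and lv: "vtx p = vtx (hat_start ?qs (length ?qs))" and lp: "P p = P (hat_start ?qs (length ?qs))"
    and fg: "FG (W p) (letters (hw ?qs p))" using I unfolding inv_def by blast+
  have q1: "1 \<le> q" and qp: "q \<le> p" using st by auto
  have hq: "?h \<le> q - 1"
  proof (cases "?m = 0")
    case True then show ?thesis by (simp add: hat_start_def)
  next
    case False
    then have "qs ! (?m - 1) < q" using s by (auto simp: sorted_wrt_append)
    then show ?thesis using False by (simp add: hat_start_def)
  qed
  have clm: "vtx (q - 1) = vtx ?h" "P (q - 1) = P ?h" using cl[rule_format, of ?m] hs_snoc[of ?m qs q] by simp_all
  have lvq: "vtx p = vtx q" "P p = P q" using lv lp hs_snoc_last[of qs q] by simp_all
  have yb: "y q = bar (y (Suc p))" and P1: "P q = P p" and P2: "P (q - 1) = P (Suc p)"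
    using op unfolding opp_def by simp_all
  have qN: "q \<in> N" "Suc p \<in> N" using q1 qp pn by auto
  have yb': "y (Suc p) = bar (y q)" using yb bar_bar[OF yE[of "Suc p"]] pn by auto
  have "u q - u (Suc p) \<in> \<int>" using op unfolding opp_def by simp
  then have "\<exists>m::int. K q (Suc p - 1) = of_int (beta (y q) * m)"
    using kcond_iff[of q "Suc p"] qp qN yb P1 by simp
  then obtain m where Km: "K q p = of_int (beta (y q) * m)" by auto
  have kh: "K ?h (q - 1) \<in> \<int>"
    using ki[rule_format, of ?m] hs_snoc[of ?m qs q] he_snoc[of ?m qs p q] by (simp add: hat_end_def)
  have rid: "K ?h (Suc p) = K ?h (q - 1) + of_int (alpha (y q) * m) + of_int (k (Suc p))"
    using ratid[OF hq q1 qp _ _ _ yb' Km] pn clm(2) lvq(2) by simp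
  have s': "sorted_wrt (<) qs" using s by (simp add: sorted_wrt_append)
  have st': "set qs \<subseteq> {1..Suc p}" using st by auto
  have ki': "\<forall>l \<le> ?m. K (hat_start qs l) (hat_end (Suc p) qs l) \<in> \<int>"
  proof (intro allI impI)
    fix l assume l: "l \<le> ?m"
    show "K (hat_start qs l) (hat_end (Suc p) qs l) \<in> \<int>"
    proof (cases "l = ?m")
      case True
      then show ?thesis using rid kh by (simp add: hat_end_def)
    next
      case False
      then have "l < ?m" using l by simp
      then show ?thesis using ki[rule_format, of l] hs_snoc[of l qs q] he_snoc[of l qs p q] he_lt[of l qs "q - 1" "Suc p"]
        by simp
    qed
  qed
  have cl': "\<forall>l < ?m. vtx (qs ! l - 1) = vtx (hat_start qs l) \<and> P (qs ! l - 1) = P (hat_start qs l)"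
  proof (intro allI impI)
    fix l assume l: "l < ?m"
    then have "(qs @ [q]) ! l = qs ! l" by (simp add: nth_append)
    moreover have "hat_start ?qs l = hat_start qs l" using hs_snoc l by simp
    moreover have "l < length ?qs" using l by simp
    moreover have "vtx (?qs ! l - 1) = vtx (hat_start ?qs l) \<and> P (?qs ! l - 1) = P (hat_start ?qs l)"
      using cl \<open>l < length ?qs\<close> by blast
    ultimately show "vtx (qs ! l - 1) = vtx (hat_start qs l) \<and> P (qs ! l - 1) = P (hat_start qs l)"
      by (simp only:)
  qed
  have ysp: "vtx (Suc p) = iota (y q)" using eE(9)[OF yE[of q]] q1 qp pn yb' by (simp add: vtx_def)
  have iyq: "iota (y q) = vtx (q - 1)" using iota_y q1 qp pn by simp
  have lv': "vtx (Suc p) = vtx ?h" using ysp iyq clm by simp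
  have lp': "P (Suc p) = P ?h" using P2 clm by simp
  let ?c = "vtx ?h"
  have z0: "0 \<notin> set qs" using st by auto
  let ?Z = "letters (fw ((Kf qs (q - 1))(?m := 0)) qs)"
  have A: "letters (hw ?qs p) = ?Z @ powl ?c (Kf qs (q - 1) ?m) @ [ge (y q)] @ powl (tau (y q)) (beta (y q) * m)"
  proof -
    have "fw (Kf ?qs p) qs = fw (Kf qs (q - 1)) qs"
      by (rule fw_cong) (simp add: Kf_def hs_snoc he_snoc)
    moreover have "Kf ?qs p (Suc ?m) = beta (y q) * m"
    proof -
      have "Kf ?qs p (Suc ?m) = \<lfloor>K q p\<rfloor>" unfolding Kf_def using hs_snoc_last he_snoc_last by simp
      also have "\<dots> = beta (y q) * m" unfolding Km by (rule floor_of_int)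
      finally show ?thesis .
    qed
    ultimately have "letters (hw ?qs p) = letters (fw (Kf qs (q - 1)) qs) @ [ge (y q)] @ powl (tau (y q)) (beta (y q) * m)"
      unfolding hw_def by (simp add: fw_snoc)
    then show ?thesis using fw_last[OF z0, of "Kf qs (q - 1)"] by simp
  qed
  have tauy: "tau (y (Suc p)) = ?c" using ysp iyq clm by (simp add: vtx_def)
  have iy: "iota (y q) = ?c" using iyq clm by simp
  have B: "FG (W (Suc p)) (?Z @ powl ?c (Kf qs (q - 1) ?m) @ ([ge (y q)] @ powl (tau (y q)) (beta (y q) * m) @ [ge (bar (y q))]) @ powl ?c (k (Suc p)))"
    using fg_app[OF fg fg_refl, of "[ge (y (Suc p))] @ powl (tau (y (Suc p))) (k (Suc p))"] A yb' tauy
    unfolding W_Suc by simp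
  have C: "FG (W (Suc p)) (?Z @ powl ?c (Kf qs (q - 1) ?m) @ powl ?c (alpha (y q) * m) @ powl ?c (k (Suc p)))"
    using fg_rw[OF B pinch[OF yE[of q], of m], where c = "?Z @ powl ?c (Kf qs (q - 1) ?m)" and d = "powl ?c (k (Suc p))"]
      iy q1 qp pn by simp
  have D: "FG (W (Suc p)) (?Z @ powl ?c (Kf qs (q - 1) ?m + alpha (y q) * m) @ powl ?c (k (Suc p)))"
    using fg_rw[OF C powl_add, where c = "?Z" and d = "powl ?c (k (Suc p))"] by simp
  have E': "FG (W (Suc p)) (?Z @ powl ?c (Kf qs (q - 1) ?m + alpha (y q) * m + k (Suc p)))"
    using fg_rw[OF D powl_add, where c = "?Z" and d = "[]"] by simp
  have Kv: "Kf qs (Suc p) ?m = Kf qs (q - 1) ?m + alpha (y q) * m + k (Suc p)"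
  proof -
    have "of_int (Kf qs (q - 1) ?m) = K ?h (q - 1)"
      unfolding Kf_def hat_end_def using of_int_floor_Ints[OF kh] by simp
    moreover have "Kf qs (Suc p) ?m = \<lfloor>K ?h (Suc p)\<rfloor>" unfolding Kf_def hat_end_def by simp
    ultimately have "K ?h (Suc p) = of_int (Kf qs (q - 1) ?m + alpha (y q) * m + k (Suc p))"
      using rid by simp
    then have "\<lfloor>K ?h (Suc p)\<rfloor> = Kf qs (q - 1) ?m + alpha (y q) * m + k (Suc p)"
      by (simp only: floor_of_int)
    then show ?thesis using \<open>Kf qs (Suc p) ?m = \<lfloor>K ?h (Suc p)\<rfloor>\<close> by (simp only:)
  qed
  have T1: "letters (hw qs (Suc p)) = letters (fw ((Kf qs (Suc p))(?m := 0)) qs) @ powl ?c (Kf qs (Suc p) ?m)"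
    unfolding hw_def by (rule fw_last[OF z0])
  have T2: "fw ((Kf qs (Suc p))(?m := 0)) qs = fw ((Kf qs (q - 1))(?m := 0)) qs"
    by (rule fw_cong) (simp add: Kf_def hat_end_def)
  have T3: "letters (hw qs (Suc p)) = ?Z @ powl ?c (Kf qs (q - 1) ?m + alpha (y q) * m + k (Suc p))"
    unfolding T1 T2 Kv by (rule refl)
  have fg': "FG (W (Suc p)) (letters (hw qs (Suc p)))" unfolding T3 by (rule E')
  show ?thesis unfolding inv_def using s' st' ki' cl' lv' lp' fg' by blast
qed

end


context gbs_setting begin

definition stk :: "nat \<Rightarrow> nat list" where "stk p = foldl (pushp L sb) [] [1..<Suc p]"

lemma stk_Suc: "stk (Suc p) = pushp L sb (stk p) (Suc p)"
  unfolding stk_def by simp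

lemma sb_L_eq_opp:
  assumes jN: "j \<in> N" and sN: "s \<in> N" and eq: "L s = sb (L j)"
  shows "opp j s"
proof (cases "hasp j")
  case True
  then obtain l where l: "l \<in> N" "opp j l" unfolding hasp_def by blast
  then have "sb (L j) = L l" using sb_L jN by blast
  then have "cl l = cl s" using eq unfolding L_def by simp
  then have "same l s" using cls_same l(1) sN by blast
  then show ?thesis using opp_same l(2) by blast
next
  case False
  then have "sb (L j) = (cl j, True)" using sb_L_no jN by blast
  then show ?thesis using eq unfolding L_def by simp
qed

lemma inv_stk: "p \<le> n \<Longrightarrow> inv p (rev (stk p))"
proof (induction p)
  case 0 then show ?case by (simp add: stk_def inv_0)
next
  case (Suc p)
  then have I: "inv p (rev (stk p))" and pn: "p < n" by simp_all
  show ?case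
  proof (cases "stk p")
    case Nil
    then have "rev (stk (Suc p)) = [] @ [Suc p]" unfolding stk_Suc pushp_def by simp
    then show ?thesis using inv_push[of p "[]"] I Nil pn by simp
  next
    case (Cons j js)
    have jr: "j \<in> set (rev (stk p))" using Cons by simp
    then have jN: "j \<in> N" using I pn unfolding inv_def by auto
    show ?thesis
    proof (cases "L (Suc p) = sb (L j)")
      case True
      then have st: "stk (Suc p) = js" unfolding stk_Suc pushp_def using Cons by simp
      have "opp j (Suc p)" using sb_L_eq_opp[OF jN _ True] pn by simp
      moreover have "inv p (rev js @ [j])" using I Cons by simp
      ultimately show ?thesis using inv_pop pn st by blast
    next
      case False
      then have "rev (stk (Suc p)) = rev (stk p) @ [Suc p]" unfolding stk_Suc pushp_def using Cons by simp
      then show ?thesis using inv_push[OF I pn] by simp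
    qed
  qed
qed

lemma sbsb_L: "i \<in> N \<Longrightarrow> sb (sb (L i)) = L i" using good_L unfolding good_def by blast

lemma ps_letters:
  assumes idx_range: "set idx \<subseteq> {1..n}"
    and red: "freely_reduced sb (map (\<lambda>i. (cl i, False)) idx)"
    and eq: "free_eq sb (map (\<lambda>i. (cl i, False)) [1..<n+1]) (map (\<lambda>i. (cl i, False)) idx)"
  shows "map L (rev (stk n)) = map L idx"
proof -
  let ?f = "\<lambda>x. sb (sb x)"
  have LL: "(\<lambda>i. (cl i, False)) = L" unfolding L_def by (rule ext) simp
  have comm: "\<And>x. sb (?f x) = ?f (sb x)" by simp
  have gd: "\<And>x. sb (sb (?f x)) = ?f x" using good_sbsb unfolding good_def by blast
  have R: "redl sb (map ?f (map L [1..<n+1])) = redl sb (map ?f (map L idx))"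
    using redl_free_eq[of sb ?f, OF comm gd] eq unfolding LL by blast
  have M1: "map ?f (map L [1..<n+1]) = map L [1..<n+1]"
    using sbsb_L by (auto simp del: upt_Suc)
  have M2: "map ?f (map L idx) = map L idx"
    using sbsb_L idx_range by auto
  have 1: "redl sb (map L [1..<n+1]) = redl sb (map L idx)" using R unfolding M1 M2 .
  have "redl sb (map L idx) = rev (map L idx)" using redl_reduced red unfolding LL by blast
  moreover have "redl sb (map L [1..<n+1]) = map L (stk n)"
    unfolding redl_def stk_def using map_foldl_pushp[of L sb "[]" "[1..<Suc n]"] by simp
  ultimately have "map L (stk n) = rev (map L idx)" using 1 by simp
  then show ?thesis by (simp add: rev_map[symmetric])
qed

end


context gbs_setting begin

definition sv :: "nat list \<Rightarrow> nat \<Rightarrow> rat" where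
  "sv qs l = (if l < length qs then u (qs ! l) * of_int (alpha (y (qs ! l))) else F (Suc n) / Pi 0 n)"
definition ev :: "nat list \<Rightarrow> nat \<Rightarrow> rat" where
  "ev qs l = (if l = 0 then 0 else u (qs ! (l - 1)) * of_int (beta (y (qs ! (l - 1)))))"
definition Ex :: "nat list \<Rightarrow> nat \<Rightarrow> rat" where "Ex qs l = sv qs l - ev qs l"

lemma F0: "F 0 = 0" unfolding F_def by simp

lemma kij_Ex:
  assumes s: "sorted_wrt (<) qs" and st: "set qs \<subseteq> N"
    and cl: "\<forall>l < length qs. P (qs ! l - 1) = P (hat_start qs l)"
    and lp: "P n = P (hat_start qs (length qs))"
    and l: "l \<le> length qs"
  shows "K (hat_start qs l) (hat_end n qs l) = Ex qs l"
proof -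
  let ?i = "hat_start qs l" and ?e = "hat_end n qs l"
  have iN: "?i \<le> n"
  proof (cases "l = 0")
    case False
    then have "qs ! (l - 1) \<in> set qs" using l by simp
    then show ?thesis using st False by (auto simp: hat_start_def)
  qed (simp add: hat_start_def)
  have ie: "?i \<le> Suc ?e"
  proof (cases "l = 0")
    case True then show ?thesis by (simp add: hat_start_def)
  next
    case False
    show ?thesis
    proof (cases "l < length qs")
      case True
      then have "qs ! (l - 1) < qs ! l" using sorted_wrt_nth_less[OF s, of "l - 1" l] False by simp
      then show ?thesis using False True by (simp add: hat_start_def hat_end_def)
    next
      case c2: False
      then show ?thesis using iN by (simp add: hat_end_def)
    qed
  qed
  have pz: "Pi 0 ?i \<noteq> 0" using Pi_nz iN by simp
  have KF: "K ?i ?e = (F (Suc ?e) - F ?i) / Pi 0 ?i" using K_F[OF ie] pz by (simp add: eq_divide_eq)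
  have EV: "F ?i / Pi 0 ?i = ev qs l"
  proof (cases "l = 0")
    case True then show ?thesis by (simp add: hat_start_def ev_def F0)
  next
    case False
    have i: "?i = qs ! (l - 1)" using False by (simp add: hat_start_def)
    have il: "l - 1 < length qs" using l False by simp
    have "?i \<in> N" unfolding i using st nth_mem[OF il] by blast
    then have "F ?i = u ?i * Pi 0 ?i * of_int (beta (y ?i))" using F_u by simp
    then have "F ?i / Pi 0 ?i = u ?i * of_int (beta (y ?i))" using pz by simp
    then show ?thesis using False i by (simp add: ev_def)
  qed
  have SV: "F (Suc ?e) / Pi 0 ?i = sv qs l"
  proof (cases "l < length qs")
    case True
    let ?j = "qs ! l"
    have jN: "?j \<in> N" using st True nth_mem by blast
    have e: "Suc ?e = ?j" using True jN by (simp add: hat_end_def)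
    have "Pi 0 ?j = Pi 0 (?j - 1) * r (y ?j)" using Pi_Suc[of 0 "?j - 1"] jN by simp
    also have "Pi 0 (?j - 1) = Pi 0 ?i"
    proof -
      have "P (?j - 1) = P ?i" using cl True by blast
      moreover have "?j - 1 \<le> n" using jN by auto
      ultimately show ?thesis using Pi0_eq[of "?j - 1" ?i] iN by blast
    qed
    finally have pj: "Pi 0 ?j = Pi 0 ?i * r (y ?j)" .
    have "F ?j = u ?j * Pi 0 ?j * of_int (beta (y ?j))" using F_u jN by simp
    also have "\<dots> = u ?j * Pi 0 ?i * of_int (alpha (y ?j))"
      using pj r_beta[OF yE[of ?j]] jN by (simp add: algebra_simps)
    finally have "F ?j / Pi 0 ?i = u ?j * of_int (alpha (y ?j))" using pz by simp
    then show ?thesis using e True by (simp add: sv_def)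
  next
    case False
    then have e: "?e = n" by (simp add: hat_end_def)
    have "Pi 0 ?i = Pi 0 n" using Pi0_eq[of ?i n] lp l False iN by simp
    then show ?thesis using e False by (simp add: sv_def)
  qed
  have "K ?i ?e = F (Suc ?e) / Pi 0 ?i - F ?i / Pi 0 ?i" unfolding KF by (rule diff_divide_distrib)
  then show ?thesis unfolding Ex_def SV EV .
qed

lemma Ints_of_int_mult: "a \<in> \<int> \<Longrightarrow> a * of_int b \<in> (\<int> :: rat set)"
  by (simp add: Ints_mult)

lemma Ex_diff:
  assumes len: "length qs = length qs'"
    and yy: "\<forall>t < length qs. y (qs ! t) = y (qs' ! t) \<and> u (qs ! t) - u (qs' ! t) \<in> \<int>"
    and l: "l \<le> length qs"
  shows "Ex qs l - Ex qs' l \<in> \<int>"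
proof -
  have "sv qs l - sv qs' l \<in> \<int>"
  proof (cases "l < length qs")
    case True
    then have "sv qs l - sv qs' l = (u (qs ! l) - u (qs' ! l)) * of_int (alpha (y (qs ! l)))"
      using yy len unfolding sv_def by (simp add: algebra_simps)
    then show ?thesis using yy True Ints_of_int_mult by simp
  next
    case False then show ?thesis using len unfolding sv_def by simp
  qed
  moreover have "ev qs l - ev qs' l \<in> \<int>"
  proof (cases "l = 0")
    case False
    then have t: "l - 1 < length qs" using l by simp
    then have "ev qs l - ev qs' l = (u (qs ! (l - 1)) - u (qs' ! (l - 1))) * of_int (beta (y (qs ! (l - 1))))"
      using yy False unfolding ev_def by (simp add: algebra_simps)
    then show ?thesis using yy t Ints_of_int_mult by simp
  qed (simp add: ev_def)
  ultimately have "(sv qs l - sv qs' l) - (ev qs l - ev qs' l) \<in> \<int>" by (rule Ints_diff)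
  then show ?thesis unfolding Ex_def by (simp add: algebra_simps)
qed

lemma fw_take:
  assumes "m \<le> length qs"
  shows "fw e qs = fw e (take m qs) @ concat (map (\<lambda>(e', m'). SE e' # pw (tau e') m')
                      (map (\<lambda>l. (y (qs ! l), e (Suc l))) [m..<length qs]))"
proof -
  have "[0..<length qs] = [0..<m] @ [m..<length qs]" using assms upt_add_eq_append[of 0 m "length qs - m"] by simp
  moreover have "map (\<lambda>l. (y (take m qs ! l), e (Suc l))) [0..<length (take m qs)] =
                 map (\<lambda>l. (y (qs ! l), e (Suc l))) [0..<m]"
    using assms by (auto intro!: map_cong)
  ultimately show ?thesis unfolding fw_def fact_word_def by simp
qed

lemma shift:
  assumes j: "j < length qs" and ye: "y (qs ! j) \<in> E"
    and iv: "iota (y (qs ! j)) = vtx (hat_start qs j)"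
    and z0: "0 \<notin> set qs"
    and same_e: "\<And>t. t \<le> length qs \<Longrightarrow> t \<noteq> j \<Longrightarrow> t \<noteq> Suc j \<Longrightarrow> e' t = e t"
    and ej: "e' j = e j + alpha (y (qs ! j)) * dz"
    and ej1: "e' (Suc j) = e (Suc j) - beta (y (qs ! j)) * dz"
  shows "FG (letters (fw e qs)) (letters (fw e' qs))"
proof -
  let ?q = "qs ! j" and ?A = "take j qs"
  let ?c = "vtx (hat_start qs j)" and ?b = "tau (y (qs ! j))"
  let ?R = "\<lambda>e. concat (map (\<lambda>(e', m'). SE e' # pw (tau e') m') (map (\<lambda>l. (y (qs ! l), e (Suc l))) [Suc j..<length qs]))"
  have tk: "take (Suc j) qs = ?A @ [?q]" using j by (simp add: take_Suc_conv_app_nth)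
  have lA: "length ?A = j" using j by simp
  have hsA: "hat_start ?A j = hat_start qs j" using j unfolding hat_start_def by simp
  have z0A: "0 \<notin> set ?A" using z0 by (meson in_set_takeD)
  have dec: "letters (fw f qs) = letters (fw (f(j := 0)) ?A) @ powl ?c (f j) @ [ge (y ?q)] @ powl ?b (f (Suc j)) @ letters (?R f)"
    for f
  proof -
    have "fw f qs = fw f (take (Suc j) qs) @ ?R f" using fw_take[of "Suc j" qs f] j by simp
    also have "fw f (take (Suc j) qs) = fw f ?A @ SE (y ?q) # pw ?b (f (Suc j))"
      unfolding tk fw_snoc lA ..
    finally have "letters (fw f qs) = letters (fw f ?A) @ [ge (y ?q)] @ powl ?b (f (Suc j)) @ letters (?R f)"
      by simp
    moreover have "letters (fw f ?A) = letters (fw (f(j := 0)) ?A) @ powl ?c (f j)"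
      using fw_last[OF z0A, of f] lA hsA by simp
    ultimately show ?thesis by simp
  qed
  have D1: "letters (fw e qs) = letters (fw (e(j := 0)) ?A) @ powl ?c (e j) @ [ge (y ?q)] @ powl ?b (e (Suc j)) @ letters (?R e)"
    using dec by blast
  have D2: "letters (fw e' qs) = letters (fw (e'(j := 0)) ?A) @ powl ?c (e' j) @ [ge (y ?q)] @ powl ?b (e' (Suc j)) @ letters (?R e')"
    using dec by blast
  have eqA: "fw (e'(j := 0)) ?A = fw (e(j := 0)) ?A"
    by (rule fw_cong) (use same_e j lA in auto)
  have eqR: "?R e' = ?R e"
  proof -
    have "map (\<lambda>l. (y (qs ! l), e' (Suc l))) [Suc j..<length qs] = map (\<lambda>l. (y (qs ! l), e (Suc l))) [Suc j..<length qs]"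
      by (rule map_cong) (use same_e in auto)
    then show ?thesis by (simp only:)
  qed
  let ?Z = "letters (fw (e(j := 0)) ?A)" and ?T = "letters (?R e)"
  have cv: "?c = iota (y ?q)" using iv by simp
  let ?M = "powl ?c (e j) @ [ge (y ?q)] @ powl ?b (e (Suc j))"
  have 1: "FG ?M (powl ?c (e j) @ (powl ?c (alpha (y ?q) * dz) @ [ge (y ?q)] @ powl ?b (- (beta (y ?q) * dz))) @ powl ?b (e (Suc j)))"
    using fg_rw[OF fg_refl fg_sym[OF conj[OF ye, of dz]], where c = "powl ?c (e j)" and d = "powl ?b (e (Suc j))"] cv
    by simp
  have 2: "FG ?M (powl ?c (e j + alpha (y ?q) * dz) @ [ge (y ?q)] @ powl ?b (- (beta (y ?q) * dz)) @ powl ?b (e (Suc j)))"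
    using fg_rw[OF 1 powl_add, where c = "[]" and d = "[ge (y ?q)] @ powl ?b (- (beta (y ?q) * dz)) @ powl ?b (e (Suc j))"]
    by simp
  have 3: "FG ?M (powl ?c (e j + alpha (y ?q) * dz) @ [ge (y ?q)] @ powl ?b (- (beta (y ?q) * dz) + e (Suc j)))"
    using fg_rw[OF 2 powl_add[of ?b "- (beta (y ?q) * dz)" "e (Suc j)"], where c = "powl ?c (e j + alpha (y ?q) * dz) @ [ge (y ?q)]" and d = "[]"]
    by simp
  have "- (beta (y ?q) * dz) + e (Suc j) = e' (Suc j)" using ej1 by simp
  then have 4: "FG ?M (powl ?c (e' j) @ [ge (y ?q)] @ powl ?b (e' (Suc j)))" using 3 unfolding ej by (simp only:)
  have "FG (?Z @ ?M @ ?T) (?Z @ (powl ?c (e' j) @ [ge (y ?q)] @ powl ?b (e' (Suc j))) @ ?T)"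
    by (rule fg_ctx[OF 4])
  then show ?thesis unfolding D1 D2 eqA eqR by simp
qed

end


context gbs_setting begin

lemma fact_word_Cons: "fact_word tau a K0 ((e1, m1) # ps) = pw a K0 @ SE e1 # fact_word tau (tau e1) m1 ps"
  unfolding fact_word_def by simp

lemma fact_word_Nil: "fact_word tau a K0 [] = pw a K0"
  unfolding fact_word_def by simp

lemma pw_cases: "pw a t = [] \<or> pw a t = [SP a t]" unfolding pw_def by simp

lemma pw_noSE: "SE e \<notin> set (pw a t)" unfolding pw_def by simp

lemma pw_inj: "pw c t = pw c' t' \<Longrightarrow> t = t'" unfolding pw_def by (auto split: if_splits)

lemma se_split:
  "(\<forall>z\<in>set xs. \<forall>e. z \<noteq> SE e) \<Longrightarrow> xs @ SE x # ys = uu @ SE e # zs \<Longrightarrow>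
   (uu = xs \<and> x = e \<and> ys = zs) \<or> (\<exists>uu'. uu = xs @ SE x # uu' \<and> ys = uu' @ SE e # zs)"
proof (induction xs arbitrary: uu)
  case Nil
  then show ?case by (cases uu) auto
next
  case (Cons a xs)
  show ?case
  proof (cases uu)
    case Nil then show ?thesis using Cons.prems by auto
  next
    case (Cons a' uu'')
    then have "xs @ SE x # ys = uu'' @ SE e # zs" "a' = a" using Cons.prems by auto
    then have "(uu'' = xs \<and> x = e \<and> ys = zs) \<or> (\<exists>uu'. uu'' = xs @ SE x # uu' \<and> ys = uu' @ SE e # zs)"
      using Cons.IH Cons.prems(1) by auto
    then show ?thesis using Cons \<open>a' = a\<close> by auto
  qed
qed

lemma pw_SEfree: "\<forall>z\<in>set (pw a t). \<forall>e. z \<noteq> SE e" unfolding pw_def by simp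

lemma fw_parse:
  "fact_word tau a K0 ps = uu @ SE e # pw c t @ SE e' # v \<Longrightarrow>
   \<exists>l. Suc l < length ps \<and> fst (ps ! l) = e \<and> snd (ps ! l) = t \<and> fst (ps ! Suc l) = e'"
proof (induction ps arbitrary: a K0 uu)
  case Nil
  then have "SE e \<in> set (pw a K0)" by (simp add: fact_word_Nil)
  then show ?case using pw_noSE[of e a K0] by contradiction
next
  case (Cons p ps)
  obtain e1 m1 where p: "p = (e1, m1)" by (cases p)
  have eq: "pw a K0 @ SE e1 # fact_word tau (tau e1) m1 ps = uu @ SE e # (pw c t @ SE e' # v)"
    using Cons.prems p by (simp add: fact_word_Cons)
  from se_split[OF pw_SEfree eq] show ?case
  proof
    assume A: "uu = pw a K0 \<and> e1 = e \<and> fact_word tau (tau e1) m1 ps = pw c t @ SE e' # v"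
    show ?thesis
    proof (cases ps)
      case Nil
      have F1: "fact_word tau (tau e1) m1 ps = pw c t @ SE e' # v" using A by blast
      have X: "pw (tau e1) m1 = pw c t @ SE e' # v" using F1 unfolding Nil fact_word_Nil .
      have "SE e' \<in> set (pw (tau e1) m1)" unfolding X by simp
      then show ?thesis using pw_noSE[of e' "tau e1" m1] by contradiction
    next
      case (Cons p2 ps'')
      obtain e2 m2 where p2: "p2 = (e2, m2)" by (cases p2)
      have F1: "fact_word tau (tau e1) m1 ps = pw c t @ SE e' # v" using A by blast
      have eq2: "pw (tau e1) m1 @ SE e2 # fact_word tau (tau e2) m2 ps'' = pw c t @ SE e' # v"
        using F1 unfolding Cons p2 fact_word_Cons .
      from se_split[OF pw_SEfree eq2] show ?thesis
      proof
        assume B: "(pw c t :: ('v, 'e) syl list) = pw (tau e1) m1 \<and> e2 = e' \<and> fact_word tau (tau e2) m2 ps'' = v"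
        then have "(pw c t :: ('v, 'e) syl list) = pw (tau e1) m1" by blast
        then have "t = m1" by (rule pw_inj)
        moreover have "e2 = e'" using B by blast
        ultimately show ?thesis using A Cons p p2 by (intro exI[of _ 0]) simp
      next
        assume "\<exists>uu'. pw c t = pw (tau e1) m1 @ SE e2 # uu' \<and> fact_word tau (tau e2) m2 ps'' = uu' @ SE e' # v"
        then obtain uu' where X: "pw c t = pw (tau e1) m1 @ SE e2 # uu'" by blast
        have "SE e2 \<in> set (pw c t)" unfolding X by simp
        then show ?thesis using pw_noSE[of e2 c t] by contradiction
      qed
    qed
  next
    assume "\<exists>uu'. uu = pw a K0 @ SE e1 # uu' \<and> fact_word tau (tau e1) m1 ps = uu' @ SE e # pw c t @ SE e' # v"
    then obtain uu' where "fact_word tau (tau e1) m1 ps = uu' @ SE e # pw c t @ SE e' # v" by blast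
    from Cons.IH[OF this] obtain l where "Suc l < length ps \<and> fst (ps ! l) = e \<and> snd (ps ! l) = t \<and> fst (ps ! Suc l) = e'"
      by blast
    then show ?thesis using p by (intro exI[of _ "Suc l"]) simp
  qed
qed

lemma no_SPSP: "fact_word tau a K0 ps \<noteq> uu @ [SP a1 k1, SP a2 k2] @ v"
proof (induction ps arbitrary: a K0 uu)
  case Nil
  have l1: "length (pw a K0 :: ('v, 'e) syl list) \<le> 1" unfolding pw_def by simp
  show ?case
  proof
    assume "fact_word tau a K0 [] = uu @ [SP a1 k1, SP a2 k2] @ v"
    then have "length (fact_word tau a K0 []) = length (uu @ [SP a1 k1, SP a2 k2] @ v)" by (rule arg_cong)
    then have "length (pw a K0 :: ('v, 'e) syl list) = length (uu @ [SP a1 k1, SP a2 k2] @ v)" unfolding fact_word_Nil .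
    then show False using l1 by simp
  qed
next
  case (Cons p ps)
  obtain e1 m1 where p: "p = (e1, m1)" by (cases p)
  show ?case
  proof
    assume eq: "fact_word tau a K0 (p # ps) = uu @ [SP a1 k1, SP a2 k2] @ v"
    then have eq': "pw a K0 @ SE e1 # fact_word tau (tau e1) m1 ps = uu @ SP a1 k1 # SP a2 k2 # v"
      using p by (simp add: fact_word_Cons)
    show False
    proof (cases "pw a K0 = ([] :: ('v, 'e) syl list)")
      case True
      then have eq'': "SE e1 # fact_word tau (tau e1) m1 ps = uu @ SP a1 k1 # SP a2 k2 # v" using eq' by simp
      show False
      proof (cases uu)
        case Nil then show False using eq'' by simp
      next
        case (Cons z uu')
        then have "fact_word tau (tau e1) m1 ps = uu' @ [SP a1 k1, SP a2 k2] @ v" using eq'' by simp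
        then show False using Cons.IH by blast
      qed
    next
      case False
      then have pwe: "pw a K0 = ([SP a K0] :: ('v, 'e) syl list)" unfolding pw_def by (simp split: if_splits)
      then have eq'': "SP a K0 # SE e1 # fact_word tau (tau e1) m1 ps = uu @ SP a1 k1 # SP a2 k2 # v" using eq' by simp
      show False
      proof (cases uu)
        case Nil then show False using eq'' by simp
      next
        case (Cons z uu')
        then have eq3: "SE e1 # fact_word tau (tau e1) m1 ps = uu' @ SP a1 k1 # SP a2 k2 # v" using eq'' by simp
        show False
        proof (cases uu')
          case Nil then show False using eq3 by simp
        next
          case (Cons z' uu'')
          then have "fact_word tau (tau e1) m1 ps = uu'' @ [SP a1 k1, SP a2 k2] @ v" using eq3 by simp
          then show False using Cons.IH by blast
        qed
      qed
    qed
  qed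
qed

lemma floor_shift:
  assumes "x \<in> \<int>" "d \<in> \<int>"
  shows "\<lfloor>x + d * of_int c\<rfloor> = \<lfloor>x\<rfloor> + c * \<lfloor>d\<rfloor>" "\<lfloor>x - d * of_int c\<rfloor> = \<lfloor>x\<rfloor> - c * \<lfloor>d\<rfloor>"
proof -
  obtain a where a: "x = of_int a" using assms(1) by (auto elim: Ints_cases)
  obtain b where b: "d = of_int b" using assms(2) by (auto elim: Ints_cases)
  have 1: "x + d * of_int c = of_int (a + b * c)" "x - d * of_int c = of_int (a - b * c)" using a b by simp_all
  have 2: "\<lfloor>x\<rfloor> = a" "\<lfloor>d\<rfloor> = b" using a b by simp_all
  show "\<lfloor>x + d * of_int c\<rfloor> = \<lfloor>x\<rfloor> + c * \<lfloor>d\<rfloor>" unfolding 1 2 floor_of_int by (simp add: mult.commute)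
  show "\<lfloor>x - d * of_int c\<rfloor> = \<lfloor>x\<rfloor> - c * \<lfloor>d\<rfloor>" unfolding 1 2 floor_of_int by (simp add: mult.commute)
qed

end


context gbs_setting begin

lemma vtx_pred: "i \<in> N \<Longrightarrow> vtx (i - 1) = iota (y i)" using iota_y by simp

lemma main:
  fixes idx :: "nat list"
  assumes idx_sorted: "sorted_wrt (<) idx"
    and idx_range: "set idx \<subseteq> {1..n}"
    and red: "freely_reduced (sigma_bar D bar alpha beta n k y)
                (map (\<lambda>i. (cls D bar alpha beta n k y i, False)) idx)"
    and eq: "free_eq (sigma_bar D bar alpha beta n k y)
                (map (\<lambda>i. (cls D bar alpha beta n k y i, False)) [1..<n+1])
                (map (\<lambda>i. (cls D bar alpha beta n k y i, False)) idx)"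
  shows "\<exists>K :: nat \<Rightarrow> int.
           (\<forall>l \<le> length idx. of_int (K l) = kij alpha beta k y (hat_start idx l) (hat_end n idx l)) \<and>
           is_factorization V E iota tau a0 (map (\<lambda>l. (y (idx ! l), K (Suc l))) [0..<length idx]) \<and>
           britton_reduced E iota tau bar alpha beta
             (fact_word tau a0 (K 0) (map (\<lambda>l. (y (idx ! l), K (Suc l))) [0..<length idx])) \<and>
           FG_eq E iota tau bar alpha beta
             (letters (fact_word tau a0 (k 0) (map (\<lambda>i. (y i, k i)) [1..<n+1])))
             (letters (fact_word tau a0 (K 0) (map (\<lambda>l. (y (idx ! l), K (Suc l))) [0..<length idx])))"
proof -
  define ps where "ps = rev (stk n)"
  let ?m = "length idx"
  have I: "inv n ps" unfolding ps_def using inv_stk by simp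
  have s: "sorted_wrt (<) ps" and st: "set ps \<subseteq> {1..n}"
    and ki: "\<forall>l \<le> length ps. K (hat_start ps l) (hat_end n ps l) \<in> \<int>"
    and cl: "\<forall>l < length ps. vtx (ps ! l - 1) = vtx (hat_start ps l) \<and> P (ps ! l - 1) = P (hat_start ps l)"
    and lv: "vtx n = vtx (hat_start ps (length ps))" and lp: "P n = P (hat_start ps (length ps))"
    and fg: "FG (W n) (letters (hw ps n))" using I unfolding inv_def by blast+
  have MLq: "map L ps = map L idx" unfolding ps_def using ps_letters[OF idx_range red eq] .
  have len: "length ps = ?m" using arg_cong[OF MLq, of length] by simp
  have psN: "ps ! t \<in> N" if t: "t < ?m" for t
  proof -
    have "ps ! t \<in> set ps" using t len by simp
    then show ?thesis using st by blast
  qed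
  have idN: "idx ! t \<in> N" if t: "t < ?m" for t
  proof -
    have "idx ! t \<in> set idx" using t by simp
    then show ?thesis using idx_range by blast
  qed
  have sm: "same (idx ! t) (ps ! t)" if t: "t < ?m" for t
  proof -
    have "L (ps ! t) = L (idx ! t)" using arg_cong[OF MLq, of "\<lambda>xs. xs ! t"] t len by simp
    then have "cl (ps ! t) = cl (idx ! t)" unfolding L_def by simp
    then show ?thesis using cls_same psN[OF t] idN[OF t] same_sym by blast
  qed
  have yeq: "t < ?m \<Longrightarrow> y (idx ! t) = y (ps ! t)" for t using sm unfolding same_def by blast
  have ueq: "t < ?m \<Longrightarrow> u (idx ! t) - u (ps ! t) \<in> \<int>" for t using sm unfolding same_def by blast
  have Peq: "t < ?m \<Longrightarrow> P (idx ! t) = P (ps ! t) \<and> P (idx ! t - 1) = P (ps ! t - 1)" for t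
    using sm unfolding same_def by blast
  have z0: "0 \<notin> set ps" using st by auto
  have hsP: "P (hat_start idx l) = P (hat_start ps l)" if "l \<le> ?m" for l
  proof (cases "l = 0")
    case False then show ?thesis using Peq[of "l - 1"] that by (simp add: hat_start_def)
  qed (simp add: hat_start_def)
  have hsV: "vtx (hat_start idx l) = vtx (hat_start ps l)" if "l \<le> ?m" for l
  proof (cases "l = 0")
    case False
    then have l1: "l - 1 < ?m" using that by simp
    have "idx ! (l - 1) \<noteq> 0" "ps ! (l - 1) \<noteq> 0" using idN[OF l1] psN[OF l1] by auto
    then show ?thesis using False yeq[OF l1] by (simp add: hat_start_def vtx_def)
  qed (simp add: hat_start_def)
  have clP: "\<forall>l < ?m. P (idx ! l - 1) = P (hat_start idx l)"
    using cl Peq hsP len by simp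
  have lpI: "P n = P (hat_start idx ?m)" using lp hsP[of ?m] len by simp
  have clV: "\<forall>l < ?m. vtx (idx ! l - 1) = vtx (hat_start idx l)"
  proof (intro allI impI)
    fix l assume l: "l < ?m"
    have "vtx (idx ! l - 1) = iota (y (idx ! l))" using vtx_pred idN l by blast
    also have "\<dots> = iota (y (ps ! l))" using yeq l by simp
    also have "\<dots> = vtx (ps ! l - 1)" using vtx_pred psN l by simp
    also have "\<dots> = vtx (hat_start ps l)" using cl l len by simp
    finally show "vtx (idx ! l - 1) = vtx (hat_start idx l)" using hsV l by simp
  qed
  have lvI: "vtx n = vtx (hat_start idx ?m)" using lv hsV[of ?m] len by simp
  have Eps: "K (hat_start ps l) (hat_end n ps l) = Ex ps l" if "l \<le> ?m" for l
    using kij_Ex[OF s _ _ lp] st cl that len by simp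
  have Eidx: "K (hat_start idx l) (hat_end n idx l) = Ex idx l" if "l \<le> ?m" for l
    using kij_Ex[OF idx_sorted idx_range clP lpI] that by simp
  have yu: "\<forall>t < length idx. y (idx ! t) = y (ps ! t) \<and> u (idx ! t) - u (ps ! t) \<in> \<int>"
    using yeq ueq by blast
  have intI: "Ex idx l \<in> \<int>" if "l \<le> ?m" for l
  proof -
    have "Ex idx l - Ex ps l \<in> \<int>" using Ex_diff[OF len[symmetric] yu that] .
    moreover have "Ex ps l \<in> \<int>" using ki Eps that len by simp
    ultimately show ?thesis using Ints_add by fastforce
  qed
  define Kid where "Kid = Kf idx n"
  have Kval: "of_int (Kid l) = K (hat_start idx l) (hat_end n idx l)" if "l \<le> ?m" for l
    unfolding Kid_def Kf_def using Eidx[OF that] of_int_floor_Ints[OF intI[OF that]] by simp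
  let ?M = "map (\<lambda>l. (y (idx ! l), Kid (Suc l))) [0..<?m]"
  have fact: "is_factorization V E iota tau a0 ?M"
    unfolding is_factorization_def
  proof (intro conjI ballI allI impI)
    show "a0 \<in> V" by (rule a0V)
  next
    fix p assume "p \<in> set ?M"
    then show "fst p \<in> E" using idN yE by auto
  next
    fix l assume l: "l < length ?M"
    then have l': "l < ?m" by simp
    have "iota (y (idx ! l)) = vtx (idx ! l - 1)" using vtx_pred[OF idN[OF l']] by simp
    also have "\<dots> = vtx (hat_start idx l)" using clV l' by blast
    finally have "iota (y (idx ! l)) = vtx (hat_start idx l)" .
    show "iota (fst (?M ! l)) = (if l = 0 then a0 else tau (fst (?M ! (l - 1))))"
    proof (cases "l = 0")
      case True then show ?thesis using \<open>iota (y (idx ! l)) = vtx (hat_start idx l)\<close> l'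
        by (simp add: hat_start_def vtx_def)
    next
      case False
      then have l1: "l - 1 < ?m" using l' by simp
      have "idx ! (l - 1) \<noteq> 0" using idN[OF l1] by auto
      then show ?thesis using \<open>iota (y (idx ! l)) = vtx (hat_start idx l)\<close> l' l1 False
        by (simp add: hat_start_def vtx_def)
    qed
  next
    assume ne: "?M \<noteq> []"
    then have m0: "?m > 0" by simp
    then have "idx ! (?m - 1) \<in> N" using idN by simp
    then have n0: "n > 0" by auto
    have "last ?M = (y (idx ! (?m - 1)), Kid ?m)" using m0 by (simp add: last_map)
    moreover have "vtx (hat_start idx ?m) = tau (y (idx ! (?m - 1)))"
      using m0 idN[of "?m - 1"] by (simp add: hat_start_def vtx_def)
    ultimately show "tau (fst (last ?M)) = a0" using lvI n0 tau_last by (simp add: vtx_def)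
  qed
  have fwM: "fw Kid idx = fact_word tau a0 (Kid 0) ?M" unfolding fw_def ..
  have brit: "britton_reduced E iota tau bar alpha beta (fact_word tau a0 (Kid 0) ?M)"
    unfolding britton_reduced_def
  proof
    assume "\<exists>ws'. (fact_word tau a0 (Kid 0) ?M, ws') \<in> britton_step E iota tau bar alpha beta"
    then obtain ws' where "(fact_word tau a0 (Kid 0) ?M, ws') \<in> britton_step E iota tau bar alpha beta" by blast
    then have "(\<exists>uu a k1 m v. fact_word tau a0 (Kid 0) ?M = uu @ [SP a k1, SP a m] @ v) \<or>
               (\<exists>uu e m v. e \<in> E \<and> fact_word tau a0 (Kid 0) ?M = uu @ [SE e] @ pw (tau e) (beta e * m) @ [SE (bar e)] @ v)"
      unfolding britton_step_def by blast
    then show False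
    proof
      assume "\<exists>uu a k1 m v. fact_word tau a0 (Kid 0) ?M = uu @ [SP a k1, SP a m] @ v"
      then show False using no_SPSP by blast
    next
      assume "\<exists>uu e m v. e \<in> E \<and> fact_word tau a0 (Kid 0) ?M = uu @ [SE e] @ pw (tau e) (beta e * m) @ [SE (bar e)] @ v"
      then obtain uu e mm v where e: "e \<in> E"
        and eqw: "fact_word tau a0 (Kid 0) ?M = uu @ SE e # pw (tau e) (beta e * mm) @ SE (bar e) # v" by auto
      from fw_parse[OF eqw] obtain l where l: "Suc l < length ?M" "fst (?M ! l) = e"
        "snd (?M ! l) = beta e * mm" "fst (?M ! Suc l) = bar e" by blast
      let ?i = "idx ! l" and ?j = "idx ! Suc l"
      have l1: "Suc l < ?m" using l by simp
      have yi: "y ?i = e" and yj: "y ?j = bar e" and Ke: "Kid (Suc l) = beta e * mm" using l l1 by auto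
      have iN: "?i \<in> N" and jN: "?j \<in> N" using idN l1 by auto
      have yb: "y ?i = bar (y ?j)" using yi yj bar_bar[OF e] by simp
      have P1: "P ?i = P (?j - 1)" using clP l1 by (simp add: hat_start_def)
      have P2: "P (?i - 1) = P ?j" using opp_aux[OF iN jN yb P1] .
      have "of_int (Kid (Suc l)) = Ex idx (Suc l)" using Kval[of "Suc l"] Eidx[of "Suc l"] l1 by simp
      also have "Ex idx (Suc l) = u ?j * of_int (alpha (y ?j)) - u ?i * of_int (beta (y ?i))"
        unfolding Ex_def sv_def ev_def using l1 by simp
      also have "alpha (y ?j) = beta e" using yj eE(8)[OF e] by simp
      finally have "of_int (beta e * mm) = (u ?j - u ?i) * of_int (beta e)"
        using Ke yi by (simp add: algebra_simps)
      then have X: "(u ?j - u ?i) * of_int (beta e) = of_int (beta e * mm)" by (rule sym)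
      have "(of_int (beta e * mm) :: rat) = of_int mm * of_int (beta e)" by simp
      with X have "(u ?j - u ?i) * of_int (beta e) = of_int mm * of_int (beta e)" by (rule trans)
      moreover have "(of_int (beta e) :: rat) \<noteq> 0" using eE(6)[OF e] by simp
      ultimately have "u ?j - u ?i = of_int mm" by (rule mult_right_cancel[THEN iffD1, rotated])
      then have "u ?i - u ?j = of_int (- mm)" by (simp add: algebra_simps)
      then have "u ?i - u ?j \<in> \<int>" by (simp only: Ints_of_int)
      then have "opp ?i ?j" unfolding opp_def using yb P1 P2 by blast
      then have sbL: "sb (L ?i) = L ?j" using sb_L iN jN by blast
      let ?X = "map L idx"
      have d1: "drop (Suc l) ?X = ?X ! Suc l # drop (Suc (Suc l)) ?X" by (rule Cons_nth_drop_Suc[symmetric]) (use l1 in simp)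
      have d2: "?X = take l ?X @ ?X ! l # drop (Suc l) ?X" by (rule id_take_nth_drop) (use l1 in simp)
      have "map L idx = take l (map L idx) @ [L ?i, sb (L ?i)] @ drop (Suc (Suc l)) (map L idx)"
        using d2 unfolding d1 using l1 sbL by simp
      moreover have "(\<lambda>i. (cl i, False)) = L" unfolding L_def by (rule ext) simp
      ultimately show False using red unfolding freely_reduced_def by metis
    qed
  qed
  define mx where "mx j = take j idx @ drop j ps" for j
  have mxl: "length (mx j) = ?m" for j unfolding mx_def using len by simp
  have mxn: "j \<le> ?m \<Longrightarrow> mx j ! t = (if t < j then idx ! t else ps ! t)" for j t
  proof -
    assume jm: "j \<le> ?m"
    have lt: "length (take j idx) = j" using jm by simp
    show ?thesis
    proof (cases "t < j")
      case True then show ?thesis unfolding mx_def using lt by (simp add: nth_append)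
    next
      case False
      then have "mx j ! t = drop j ps ! (t - j)" unfolding mx_def using lt by (simp add: nth_append)
      also have "\<dots> = ps ! (j + (t - j))" using jm len by (simp add: nth_drop)
      finally show ?thesis using False by simp
    qed
  qed
  have mxyu: "\<forall>t < length (mx j). y (mx j ! t) = y (ps ! t) \<and> u (mx j ! t) - u (ps ! t) \<in> \<int>" if "j \<le> ?m" for j
    using mxn[OF that] mxl yeq ueq by auto
  have mxint: "Ex (mx j) l \<in> \<int>" if "l \<le> ?m" "j \<le> ?m" for j l
  proof -
    have "Ex (mx j) l - Ex ps l \<in> \<int>" using Ex_diff[OF _ mxyu[OF that(2)], of l] that(1) mxl len by simp
    moreover have "Ex ps l \<in> \<int>" using ki Eps that len by simp
    ultimately show ?thesis using Ints_add by fastforce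
  qed
  have chain: "j \<le> ?m \<Longrightarrow> FG (letters (fw (\<lambda>l. \<lfloor>Ex ps l\<rfloor>) ps)) (letters (fw (\<lambda>l. \<lfloor>Ex (mx j) l\<rfloor>) ps))" for j
  proof (induction j)
    case 0 then show ?case unfolding mx_def by (simp add: fg_refl)
  next
    case (Suc j)
    then have j: "j < ?m" by simp
    have jm: "j \<le> ?m" "Suc j \<le> ?m" using j by simp_all
    let ?d = "u (idx ! j) - u (ps ! j)"
    have dI: "?d \<in> \<int>" using ueq j by blast
    have jps: "j < length ps" using j len by simp
    have ye: "y (ps ! j) \<in> E" using yE psN[OF j] by auto
    have "iota (y (ps ! j)) = vtx (ps ! j - 1)" using vtx_pred[OF psN[OF j]] by simp
    also have "\<dots> = vtx (hat_start ps j)" using cl jps by blast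
    finally have iv: "iota (y (ps ! j)) = vtx (hat_start ps j)" .
    have sv_same: "sv (mx (Suc j)) t = sv (mx j) t" if "t \<noteq> j" for t
      unfolding sv_def using mxn[OF jm(1)] mxn[OF jm(2)] mxl that by auto
    have ev_same: "ev (mx (Suc j)) t = ev (mx j) t" if "t \<noteq> Suc j" for t
    proof (cases "t = 0")
      case False
      then have "t - 1 \<noteq> j" using that by simp
      then show ?thesis unfolding ev_def using mxn[OF jm(1)] mxn[OF jm(2)] mxl by auto
    qed (simp add: ev_def)
    have Ej: "Ex (mx (Suc j)) j = Ex (mx j) j + ?d * of_int (alpha (y (ps ! j)))"
    proof -
      have "sv (mx (Suc j)) j = u (idx ! j) * of_int (alpha (y (ps ! j)))" unfolding sv_def using mxn[OF jm(2)] mxl j yeq by simp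
      moreover have "sv (mx j) j = u (ps ! j) * of_int (alpha (y (ps ! j)))" unfolding sv_def using mxn[OF jm(1)] mxl j by simp
      moreover have "ev (mx (Suc j)) j = ev (mx j) j" using ev_same by simp
      ultimately show ?thesis unfolding Ex_def by (simp add: algebra_simps)
    qed
    have Ej1: "Ex (mx (Suc j)) (Suc j) = Ex (mx j) (Suc j) - ?d * of_int (beta (y (ps ! j)))"
    proof -
      have "ev (mx (Suc j)) (Suc j) = u (idx ! j) * of_int (beta (y (ps ! j)))" unfolding ev_def using mxn[OF jm(2)] mxl j yeq by simp
      moreover have "ev (mx j) (Suc j) = u (ps ! j) * of_int (beta (y (ps ! j)))" unfolding ev_def using mxn[OF jm(1)] mxl j by simp
      moreover have "sv (mx (Suc j)) (Suc j) = sv (mx j) (Suc j)" using sv_same by simp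
      ultimately show ?thesis unfolding Ex_def by (simp add: algebra_simps)
    qed
    have sh: "FG (letters (fw (\<lambda>l. \<lfloor>Ex (mx j) l\<rfloor>) ps)) (letters (fw (\<lambda>l. \<lfloor>Ex (mx (Suc j)) l\<rfloor>) ps))"
    proof (rule shift[OF jps ye iv z0, where dz = "\<lfloor>?d\<rfloor>"])
      fix t assume "t \<le> length ps" "t \<noteq> j" "t \<noteq> Suc j"
      then show "\<lfloor>Ex (mx (Suc j)) t\<rfloor> = \<lfloor>Ex (mx j) t\<rfloor>" unfolding Ex_def using sv_same ev_same by simp
    next
      show "\<lfloor>Ex (mx (Suc j)) j\<rfloor> = \<lfloor>Ex (mx j) j\<rfloor> + alpha (y (ps ! j)) * \<lfloor>?d\<rfloor>"
        unfolding Ej using floor_shift(1)[OF mxint[OF _ jm(1)] dI] j by simp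
    next
      show "\<lfloor>Ex (mx (Suc j)) (Suc j)\<rfloor> = \<lfloor>Ex (mx j) (Suc j)\<rfloor> - beta (y (ps ! j)) * \<lfloor>?d\<rfloor>"
        unfolding Ej1 using floor_shift(2)[OF mxint[OF _ jm(1)] dI] j by simp
    qed
    show ?case using fg_trans[OF Suc.IH sh] j by simp
  qed
  have mxm: "mx ?m = idx" unfolding mx_def using len by simp
  have G1: "FG (letters (fw (\<lambda>l. \<lfloor>Ex ps l\<rfloor>) ps)) (letters (fw (\<lambda>l. \<lfloor>Ex idx l\<rfloor>) ps))"
    using chain[of ?m] mxm by simp
  have G2: "fw (\<lambda>l. \<lfloor>Ex ps l\<rfloor>) ps = hw ps n"
    unfolding hw_def by (rule fw_cong) (simp add: Kf_def Eps len)
  have G3: "fw (\<lambda>l. \<lfloor>Ex idx l\<rfloor>) ps = fw Kid idx"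
  proof -
    have "fw (\<lambda>l. \<lfloor>Ex idx l\<rfloor>) ps = fw (\<lambda>l. \<lfloor>Ex idx l\<rfloor>) idx" by (rule fw_ycong) (use len yeq in auto)
    also have "\<dots> = fw Kid idx" by (rule fw_cong) (simp add: Kid_def Kf_def Eidx)
    finally show ?thesis .
  qed
  have fgfin: "FG (W n) (letters (fact_word tau a0 (Kid 0) ?M))"
    using fg_trans[OF fg G1[unfolded G2 G3]] fwM by simp
  have Wn: "W n = letters (fact_word tau a0 (k 0) (map (\<lambda>i. (y i, k i)) [1..<n+1]))" unfolding W_def ..
  show ?thesis
    apply (rule exI[of _ Kid])
    using Kval fact brit fgfin Wn by simp
qed

end

theorem corollary3p9:
  fixes V :: "'v set" and E :: "'e set"
    and iota tau :: "'e \<Rightarrow> 'v" and bar :: "'e \<Rightarrow> 'e"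
    and alpha beta :: "'e \<Rightarrow> int" and D :: "'e set"
    and a0 :: 'v and n :: nat and k :: "nat \<Rightarrow> int" and y :: "nat \<Rightarrow> 'e"
    and idx :: "nat list"
  assumes G: "gbs_graph V E iota tau bar alpha beta"
    and D: "orientation E bar D"
    and w: "is_factorization V E iota tau a0 (map (\<lambda>i. (y i, k i)) [1..<n+1])"
    and idx_sorted: "sorted_wrt (<) idx"
    and idx_range: "set idx \<subseteq> {1..n}"
    and red: "freely_reduced (sigma_bar D bar alpha beta n k y)
                (map (\<lambda>i. (cls D bar alpha beta n k y i, False)) idx)"
    and eq: "free_eq (sigma_bar D bar alpha beta n k y)
                (map (\<lambda>i. (cls D bar alpha beta n k y i, False)) [1..<n+1])
                (map (\<lambda>i. (cls D bar alpha beta n k y i, False)) idx)"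
  shows "\<exists>K :: nat \<Rightarrow> int.
           (\<forall>l \<le> length idx. of_int (K l) = kij alpha beta k y (hat_start idx l) (hat_end n idx l)) \<and>
           is_factorization V E iota tau a0 (map (\<lambda>l. (y (idx ! l), K (Suc l))) [0..<length idx]) \<and>
           britton_reduced E iota tau bar alpha beta
             (fact_word tau a0 (K 0) (map (\<lambda>l. (y (idx ! l), K (Suc l))) [0..<length idx])) \<and>
           FG_eq E iota tau bar alpha beta
             (letters (fact_word tau a0 (k 0) (map (\<lambda>i. (y i, k i)) [1..<n+1])))
             (letters (fact_word tau a0 (K 0) (map (\<lambda>l. (y (idx ! l), K (Suc l))) [0..<length idx])))"
proof -
  interpret gbs_setting V E iota tau bar alpha beta D a0 n k y
    by (rule gbs_setting.intro[OF G D w])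
  show ?thesis by (rule main[OF idx_sorted idx_range red eq])
qed

end
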